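(* For every constructor rewrite system $R$ over a signature $\Sigma$, every term $t$ over $\Sigma$ and every natural number $n$, the following two conditions are equivalent: (1) $t\rightarrow^n u$ in $R$, where $u$ is in normal form; (2) $\mathcal{G}(t)\rightarrow^n G$ in the constructor graph rewrite system corresponding to $R$, where $G$ is in normal form and $\mathcal{T}(G)=u$.
   Context: A constructor rewrite system over $\Sigma$ (symbols are constructors or function symbols, each with an arity) is a set of rules $\mathbf{f}(p_1,\dots,p_n)\rightarrow t$, $\mathbf{f}$ a function symbol, $p_i$ patterns (built from constructors and variables), $t$ built from constructors, function symbols and variables; it is assumed orthogonal (left-hand sides linear and pairwise non-overlapping), and rewriting is call-by-value: a step replaces anywhere a subterm $l\sigma$ by $r\sigma$ with $l\rightarrow r$ a rule and $\sigma$ mapping variables to constructor terms (closed terms built from constructors only). Normal form = no step applies. A labelled graph over $\Sigma$ is a triple $(V,\alpha,\delta)$: $V$ a finite set of vertices, $\alpha:V\to V^*$ giving the ordered successors of each vertex, $\delta:V\rightharpoonup\Sigma$ a partial labelling, with the length of $\alpha(v)$ equal to the arity of $\delta(v)$ if $\delta(v)$ is defined and $0$ otherwise, and the induced directed graph acyclic. It is closed if $\delta$ is total. A term graph is a labelled graph with a distinguished root vertex. A homomorphism $\varphi$ of labelled graphs satisfies $\delta_H(\varphi(v))=\delta_G(v)$ and $\alpha_H(\varphi(v))=\varphi^*(\alpha_G(v))$ for all $v$ in the domain of $\delta_G$; for term graphs it also maps root to root. Term graphs are considered up to isomorphism. A path $v_1,\dots,v_n$ is a constructor path if every $\delta(v_i)$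 is a constructor; a pattern path if every $\delta(v_i)$ is a constructor or undefined; a left path if $n\ge1$, $\delta(v_1)$ is a function symbol and $v_2,\dots,v_n$ is a pattern path. A graph rewrite rule is a triple $(H,r,s)$ with $H$ a labelled graph and $r,s$ vertices such that every path starting at $r$ is a left path. For a vertex $v$, $H|_v$ is the term graph of vertices reachable from $v$, root $v$. A redex in a term graph $G$ is a rule $(H,r,s)$ with a homomorphism $\varphi:H|_r\to G$ such that for every vertex $v$ of $H|_r$ with undefined label, every path in $G$ starting at $\varphi(v)$ is a constructor path. Firing it: (build) add to $G$ a fresh copy of the vertices of $H$ reachable from $s$ but not from $r$, with labels and successor lists as in $H$, successors lying in $H|_r$ being replaced by their $\varphi$-images; let $s'$ be the copy of $s$ (or $\varphi(s)$ if $s$ is reachable from $r$); (redirection) redirect every edge pointing to $\varphi(r)$ to $s'$, and if $\varphi(r)$ was the root, $s'$ becomes the root; (garbage collection) remove vertices not reachable from the root. The result $I$ is written $G\rightarrow I$. A term graph is in normal form if it has no redex. $\mathcal{G}(t)$ is the tree term graph with one vertex per symbol occurrence of $t$ labelled by that symbol, variable occurrences being unlabelled vertices annotated with their variable, rooted at the head symbol. $\mathcal{T}(G)$ is the term obtained by unfolding the term graph $G$ from its root (unlabelled vertices read as their variables). A rule $l\rightarrow r$ of $R$ corresponds to the graph rewrite rule obtained from the disjoint union of the trees of $l$ and $r$ by identifying the vertices representing the same variable, with left root the root of $l$ and right root the root of $r$. The constructor graph rewrite system corresponding to $R$ is the set of graph rewrite rules corresponding to the rules of $R$. *)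

theory Defs
  imports Main "HOL-Library.Countable"
begin

text \<open>A signature is given by a predicate con (which symbols are constructors;
 the others are function symbols) and an arity function ar.\<close>

datatype ('f, 'x) trm = Var 'x | Fun 'f "('f, 'x) trm list"

fun wf_trm :: "('f \<Rightarrow> nat) \<Rightarrow> ('f, 'x) trm \<Rightarrow> bool" where
  "wf_trm ar (Var x) = True"
| "wf_trm ar (Fun f ts) = (length ts = ar f \<and> (\<forall>t\<in>set ts. wf_trm ar t))"

fun vars :: "('f, 'x) trm \<Rightarrow> 'x set" where
  "vars (Var x) = {x}"
| "vars (Fun f ts) = (\<Union>t\<in>set ts. vars t)"

fun funs :: "('f, 'x) trm \<Rightarrow> 'f set" where
  "funs (Var x) = {}"
| "funs (Fun f ts) = insert f (\<Union>t\<in>set ts. funs t)"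

definition constr_term :: "('f \<Rightarrow> bool) \<Rightarrow> ('f, 'x) trm \<Rightarrow> bool" where
  "constr_term con t \<longleftrightarrow> vars t = {} \<and> (\<forall>f\<in>funs t. con f)"

definition pattern :: "('f \<Rightarrow> bool) \<Rightarrow> ('f \<Rightarrow> nat) \<Rightarrow> ('f, 'x) trm \<Rightarrow> bool" where
  "pattern con ar t \<longleftrightarrow> wf_trm ar t \<and> (\<forall>f\<in>funs t. con f)"

fun subst :: "('x \<Rightarrow> ('f, 'y) trm) \<Rightarrow> ('f, 'x) trm \<Rightarrow> ('f, 'y) trm" where
  "subst \<sigma> (Var x) = \<sigma> x"
| "subst \<sigma> (Fun f ts) = Fun f (map (subst \<sigma>) ts)"

fun valid_pos :: "('f, 'x) trm \<Rightarrow> nat list \<Rightarrow> bool" where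
  "valid_pos t [] = True"
| "valid_pos (Var x) (i # p) = False"
| "valid_pos (Fun f ts) (i # p) = (i < length ts \<and> valid_pos (ts ! i) p)"

definition poss :: "('f, 'x) trm \<Rightarrow> nat list set" where
  "poss t = {p. valid_pos t p}"

fun subt :: "('f, 'x) trm \<Rightarrow> nat list \<Rightarrow> ('f, 'x) trm" where
  "subt t [] = t"
| "subt (Var x) (i # p) = Var x"
| "subt (Fun f ts) (i # p) = subt (ts ! i) p"

fun replace :: "('f, 'x) trm \<Rightarrow> nat list \<Rightarrow> ('f, 'x) trm \<Rightarrow> ('f, 'x) trm" where
  "replace t [] s = s"
| "replace (Var x) (i # p) s = Var x"
| "replace (Fun f ts) (i # p) s = Fun f (ts[i := replace (ts ! i) p s])"

definition linear_trm :: "('f, 'x) trm \<Rightarrow> bool" where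
  "linear_trm t \<longleftrightarrow> (\<forall>p q x. p \<in> poss t \<longrightarrow> q \<in> poss t \<longrightarrow>
       subt t p = Var x \<longrightarrow> subt t q = Var x \<longrightarrow> p = q)"

text \<open>Non-overlapping left-hand sides (variables of different rules renamed apart,
  i.e. independent substitutions).\<close>
definition non_overlapping :: "(('f, 'x) trm \<times> ('f, 'x) trm) set \<Rightarrow> bool" where
  "non_overlapping R \<longleftrightarrow> (\<forall>l1 r1 l2 r2 p (\<sigma>1 :: 'x \<Rightarrow> ('f, 'x) trm) (\<sigma>2 :: 'x \<Rightarrow> ('f, 'x) trm).
     (l1, r1) \<in> R \<longrightarrow> (l2, r2) \<in> R \<longrightarrow> p \<in> poss l1 \<longrightarrow> (\<forall>x. subt l1 p \<noteq> Var x) \<longrightarrow>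
     subst \<sigma>1 (subt l1 p) = subst \<sigma>2 l2 \<longrightarrow> p = [] \<and> (l1, r1) = (l2, r2))"

definition constructor_trs ::
  "('f \<Rightarrow> bool) \<Rightarrow> ('f \<Rightarrow> nat) \<Rightarrow> (('f, 'x) trm \<times> ('f, 'x) trm) set \<Rightarrow> bool" where
  "constructor_trs con ar R \<longleftrightarrow>
     (\<forall>(l, r) \<in> R. (\<exists>f ps. l = Fun f ps \<and> \<not> con f \<and> length ps = ar f \<and>
                          (\<forall>p\<in>set ps. pattern con ar p))
                 \<and> wf_trm ar r \<and> vars r \<subseteq> vars l \<and> linear_trm l)
     \<and> non_overlapping R"

definition cbv_step ::
  "('f \<Rightarrow> bool) \<Rightarrow> (('f, 'x) trm \<times> ('f, 'x) trm) set \<Rightarrow> ('f, 'x) trm \<Rightarrow> ('f, 'x) trm \<Rightarrow> bool" where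
  "cbv_step con R t t' \<longleftrightarrow> (\<exists>l r p \<sigma>. (l, r) \<in> R \<and> p \<in> poss t \<and>
       (\<forall>x\<in>vars l. constr_term con (\<sigma> x)) \<and>
       subt t p = subst \<sigma> l \<and> t' = replace t p (subst \<sigma> r))"

definition term_NF :: "('f \<Rightarrow> bool) \<Rightarrow> (('f, 'x) trm \<times> ('f, 'x) trm) set \<Rightarrow> ('f, 'x) trm \<Rightarrow> bool" where
  "term_NF con R u \<longleftrightarrow> \<not> (\<exists>u'. cbv_step con R u u')"

text \<open>Term graphs over vertices of type nat. lab is the partial labelling delta,
 succ the successor lists alpha; varof annotates unlabelled vertices with variables.\<close>
record ('f, 'x) tgraph =
  verts :: "nat set"
  succ :: "nat \<Rightarrow> nat list"
  lab :: "nat \<Rightarrow> 'f option"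
  varof :: "nat \<Rightarrow> 'x option"
  root :: nat

definition edges :: "('v \<Rightarrow> 'v list) \<Rightarrow> ('v \<times> 'v) set" where
  "edges \<alpha> = {(a, b). b \<in> set (\<alpha> a)}"

definition reach :: "('v \<Rightarrow> 'v list) \<Rightarrow> 'v \<Rightarrow> 'v set" where
  "reach \<alpha> v = {w. (v, w) \<in> (edges \<alpha>)\<^sup>*}"

definition wf_lgraph :: "('f \<Rightarrow> nat) \<Rightarrow> 'v set \<Rightarrow> ('v \<Rightarrow> 'v list) \<Rightarrow> ('v \<Rightarrow> 'f option) \<Rightarrow> bool" where
  "wf_lgraph ar V \<alpha> \<delta> \<longleftrightarrow> finite V \<and>
     (\<forall>v\<in>V. set (\<alpha> v) \<subseteq> V \<and> length (\<alpha> v) = (case \<delta> v of Some f \<Rightarrow> ar f | None \<Rightarrow> 0)) \<and>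
     acyclic (edges \<alpha> \<inter> (V \<times> V))"

definition is_path :: "('f, 'x) tgraph \<Rightarrow> nat list \<Rightarrow> bool" where
  "is_path G vs \<longleftrightarrow> vs \<noteq> [] \<and> set vs \<subseteq> verts G \<and>
     (\<forall>i. Suc i < length vs \<longrightarrow> vs ! Suc i \<in> set (succ G (vs ! i)))"

definition constructor_path :: "('f \<Rightarrow> bool) \<Rightarrow> ('f, 'x) tgraph \<Rightarrow> nat list \<Rightarrow> bool" where
  "constructor_path con G vs \<longleftrightarrow> (\<forall>w\<in>set vs. \<exists>c. lab G w = Some c \<and> con c)"

record ('w, 'f) grule =
  gV :: "'w set"
  gsucc :: "'w \<Rightarrow> 'w list"
  glab :: "'w \<Rightarrow> 'f option"
  lroot :: 'w
  rroot :: 'w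

definition is_redex ::
  "('f \<Rightarrow> bool) \<Rightarrow> ('w, 'f) grule \<Rightarrow> ('w \<Rightarrow> nat) \<Rightarrow> ('f, 'x) tgraph \<Rightarrow> bool" where
  "is_redex con H \<phi> G \<longleftrightarrow>
     (\<forall>v\<in>reach (gsucc H) (lroot H). \<phi> v \<in> verts G) \<and>
     (\<forall>v\<in>reach (gsucc H) (lroot H). \<forall>f. glab H v = Some f \<longrightarrow>
         lab G (\<phi> v) = Some f \<and> succ G (\<phi> v) = map \<phi> (gsucc H v)) \<and>
     (\<forall>v\<in>reach (gsucc H) (lroot H). glab H v = None \<longrightarrow>
         (\<forall>vs. is_path G vs \<and> hd vs = \<phi> v \<longrightarrow> constructor_path con G vs))"

definition new_part :: "('w, 'f) grule \<Rightarrow> 'w set" where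
  "new_part H = reach (gsucc H) (rroot H) - reach (gsucc H) (lroot H)"

text \<open>iota chooses the fresh copies of the vertices to be built.\<close>
definition fresh_for :: "('w, 'f) grule \<Rightarrow> ('w \<Rightarrow> nat) \<Rightarrow> ('f, 'x) tgraph \<Rightarrow> bool" where
  "fresh_for H \<iota> G \<longleftrightarrow> inj_on \<iota> (new_part H) \<and> \<iota> ` new_part H \<inter> verts G = {}"

definition fire ::
  "('w, 'f) grule \<Rightarrow> ('w \<Rightarrow> nat) \<Rightarrow> ('w \<Rightarrow> nat) \<Rightarrow> ('f, 'x) tgraph \<Rightarrow> ('f, 'x) tgraph" where
  "fire H \<phi> \<iota> G =
    (let N = new_part H;
         \<psi> = (\<lambda>w. if w \<in> reach (gsucc H) (lroot H) then \<phi> w else \<iota> w);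
         isnew = (\<lambda>v. \<exists>w\<in>N. \<iota> w = v);
         pre = (\<lambda>v. THE w. w \<in> N \<and> \<iota> w = v);
         s' = \<psi> (rroot H);
         rd = (\<lambda>v. if v = \<phi> (lroot H) then s' else v);
         \<comment> \<open>build\<close>
         succ1 = (\<lambda>v. if isnew v then map \<psi> (gsucc H (pre v)) else succ G v);
         lab1 = (\<lambda>v. if isnew v then glab H (pre v) else lab G v);
         var1 = (\<lambda>v. if isnew v then None else varof G v);
         \<comment> \<open>redirection\<close>
         succ2 = (\<lambda>v. map rd (succ1 v));
         root2 = rd (root G)
     in \<comment> \<open>garbage collection\<close>
       \<lparr> verts = reach succ2 root2, succ = succ2, lab = lab1, varof = var1, root = root2 \<rparr>)"

definition varpos :: "('f, 'x) trm \<Rightarrow> 'x \<Rightarrow> nat list" where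
  "varpos l x = (SOME p. p \<in> poss l \<and> subt l p = Var x)"

text \<open>Vertices (False, p): positions p of the left-hand side; (True, p): non-variable
 positions of the right-hand side; variable occurrences of the right-hand side are
 identified with the (unique, by linearity) occurrence of the variable in the left-hand side.\<close>
definition rnode :: "('f, 'x) trm \<Rightarrow> ('f, 'x) trm \<Rightarrow> nat list \<Rightarrow> bool \<times> nat list" where
  "rnode l r p = (case subt r p of Var x \<Rightarrow> (False, varpos l x) | Fun f ts \<Rightarrow> (True, p))"

definition rule_graph :: "('f, 'x) trm \<Rightarrow> ('f, 'x) trm \<Rightarrow> (bool \<times> nat list, 'f) grule" where
  "rule_graph l r =
    \<lparr> gV = {(False, p) | p. p \<in> poss l} \<union> {(True, p) | p. p \<in> poss r \<and> (\<forall>x. subt r p \<noteq> Var x)},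
      gsucc = (\<lambda>(b, p). if b then
                   (case subt r p of Fun f ts \<Rightarrow> map (\<lambda>i. rnode l r (p @ [i])) [0..<length ts] | Var x \<Rightarrow> [])
                 else
                   (case subt l p of Fun f ts \<Rightarrow> map (\<lambda>i. (False, p @ [i])) [0..<length ts] | Var x \<Rightarrow> [])),
      glab = (\<lambda>(b, p). case subt (if b then r else l) p of Fun f ts \<Rightarrow> Some f | Var x \<Rightarrow> None),
      lroot = (False, []),
      rroot = rnode l r [] \<rparr>"

definition gstep ::
  "('f \<Rightarrow> bool) \<Rightarrow> (('f, 'x) trm \<times> ('f, 'x) trm) set \<Rightarrow> ('f, 'x) tgraph \<Rightarrow> ('f, 'x) tgraph \<Rightarrow> bool" where
  "gstep con R G G' \<longleftrightarrow> (\<exists>l r \<phi> \<iota>. (l, r) \<in> R \<and> is_redex con (rule_graph l r) \<phi> G \<and>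
       fresh_for (rule_graph l r) \<iota> G \<and> G' = fire (rule_graph l r) \<phi> \<iota> G)"

definition graph_NF ::
  "('f \<Rightarrow> bool) \<Rightarrow> (('f, 'x) trm \<times> ('f, 'x) trm) set \<Rightarrow> ('f, 'x) tgraph \<Rightarrow> bool" where
  "graph_NF con R G \<longleftrightarrow> \<not> (\<exists>l r \<phi>. (l, r) \<in> R \<and> is_redex con (rule_graph l r) \<phi> G)"

text \<open>The tree term graph of a term; vertices are positions, encoded injectively as nats.\<close>
definition graph_of :: "('f, 'x) trm \<Rightarrow> ('f, 'x) tgraph" where
  "graph_of t =
    \<lparr> verts = to_nat ` poss t,
      succ = (\<lambda>v. if v \<in> to_nat ` poss t then
                (case subt t (from_nat v) of
                   Fun f ts \<Rightarrow> map (\<lambda>i. to_nat (from_nat v @ [i])) [0..<length ts]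
                 | Var x \<Rightarrow> [])
              else []),
      lab = (\<lambda>v. if v \<in> to_nat ` poss t then
                (case subt t (from_nat v) of Fun f ts \<Rightarrow> Some f | Var x \<Rightarrow> None) else None),
      varof = (\<lambda>v. if v \<in> to_nat ` poss t then
                (case subt t (from_nat v) of Fun f ts \<Rightarrow> None | Var x \<Rightarrow> Some x) else None),
      root = to_nat ([] :: nat list) \<rparr>"

text \<open>Unfolding with fuel; for an acyclic finite graph, fuel card V + 1 suffices.\<close>
fun unfold_tg :: "('f, 'x) tgraph \<Rightarrow> nat \<Rightarrow> nat \<Rightarrow> ('f, 'x) trm" where
  "unfold_tg G 0 v = undefined"
| "unfold_tg G (Suc k) v =
     (case lab G v of Some f \<Rightarrow> Fun f (map (unfold_tg G k) (succ G v))
                    | None \<Rightarrow> Var (the (varof G v)))"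

definition term_of :: "('f, 'x) tgraph \<Rightarrow> ('f, 'x) trm" where
  "term_of G = unfold_tg G (Suc (card (verts G))) (root G)"

end

theory Submission
  imports Defs
begin


lemma valid_pos_append: "valid_pos t (p @ q) \<longleftrightarrow> valid_pos t p \<and> valid_pos (subt t p) q"
  by (induction t p rule: valid_pos.induct) auto

lemma subt_append: "valid_pos t p \<Longrightarrow> subt t (p @ q) = subt (subt t p) q"
  by (induction t p rule: valid_pos.induct) auto

lemma subt_subst: "valid_pos l p \<Longrightarrow> valid_pos (subst \<sigma> l) p \<and> subt (subst \<sigma> l) p = subst \<sigma> (subt l p)"
  by (induction l p rule: valid_pos.induct) auto

lemma size_nth_less: "i < length ts \<Longrightarrow> size (ts ! i) < size (Fun f ts)"
  using size_list_estimation'[of "ts ! i" ts "size (ts ! i)" size] by (simp add: nth_mem)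

lemma size_subt: "valid_pos t p \<Longrightarrow> size (subt t p) \<le> size t"
proof (induction t p rule: valid_pos.induct)
  case (3 f ts i p)
  then show ?case using size_nth_less[of i ts f] by simp
qed auto

lemma size_subt_less: "valid_pos t p \<Longrightarrow> p \<noteq> [] \<Longrightarrow> size (subt t p) < size t"
proof (induction t p rule: valid_pos.induct)
  case (3 f ts i p)
  then show ?case using size_nth_less[of i ts f] size_subt[of "ts!i" p] by simp
qed auto

lemma constr_Fun: "constr_term con (Fun f ts) \<longleftrightarrow> con f \<and> (\<forall>t\<in>set ts. constr_term con t)"
  by (auto simp: constr_term_def)
lemma constr_Var: "\<not> constr_term con (Var x)"
  by (auto simp: constr_term_def)

lemma constr_subt: "constr_term con t \<Longrightarrow> valid_pos t p \<Longrightarrow> constr_term con (subt t p)"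
  by (induction t p rule: valid_pos.induct) (auto simp: constr_Fun constr_Var)

lemma poss_Fun_cases: "p \<in> poss (Fun f ts) \<Longrightarrow> p = [] \<or> (\<exists>i q. p = i # q \<and> i < length ts \<and> q \<in> poss (ts ! i))"
  by (cases p) (auto simp: poss_def)

lemma finite_poss: "finite (poss t)"
proof (induction t)
  case (Var x)
  have "poss (Var x) \<subseteq> {[]}" by (auto simp: poss_def elim: valid_pos.elims)
  then show ?case using finite_subset by blast
next
  case (Fun f ts)
  have "poss (Fun f ts) \<subseteq> insert [] (\<Union>i<length ts. (Cons i) ` poss (ts ! i))"
    using poss_Fun_cases by fastforce
  moreover have "finite (\<Union>i<length ts. (Cons i) ` poss (ts ! i))"
    using Fun by (auto simp: nth_mem)
  ultimately show ?case by (meson finite_insert finite_subset)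
qed

fun walk :: "('f, 'x) tgraph \<Rightarrow> nat \<Rightarrow> nat list \<Rightarrow> nat option" where
  "walk G v [] = Some v"
| "walk G v (i # q) = (if i < length (succ G v) then walk G (succ G v ! i) q else None)"

lemma walk_append: "walk G v (p @ q) = (case walk G v p of None \<Rightarrow> None | Some u \<Rightarrow> walk G u q)"
  by (induction p arbitrary: v) auto

lemma walk_append_Some: "walk G v p = Some u \<Longrightarrow> walk G v (p @ q) = walk G u q"
  by (simp add: walk_append)

lemma walk_snoc: "walk G v (p @ [i]) = Some u \<longleftrightarrow>
   (\<exists>x. walk G v p = Some x \<and> i < length (succ G x) \<and> succ G x ! i = u)"
  by (auto simp: walk_append split: option.splits)

lemma reach_walk: "u \<in> reach (succ G) v \<longleftrightarrow> (\<exists>q. walk G v q = Some u)"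
proof
  assume "u \<in> reach (succ G) v"
  then have "(v, u) \<in> (edges (succ G))\<^sup>*" by (simp add: reach_def)
  then show "\<exists>q. walk G v q = Some u"
  proof (induction rule: rtrancl_induct)
    case base
    then show ?case by (rule exI[of _ "[]"]) simp
  next
    case (step a b)
    then obtain q where q: "walk G v q = Some a" by blast
    from step(2) have "b \<in> set (succ G a)" by (simp add: edges_def)
    then obtain i where "i < length (succ G a)" "succ G a ! i = b" by (auto simp: in_set_conv_nth)
    then have "walk G v (q @ [i]) = Some b" using q by (auto simp: walk_snoc)
    then show ?case by blast
  qed
next
  assume "\<exists>q. walk G v q = Some u"
  then obtain q where "walk G v q = Some u" by blast
  then have "(v, u) \<in> (edges (succ G))\<^sup>*"
  proof (induction q arbitrary: v)
    case Nil
    then show ?case by simp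
  next
    case (Cons i q)
    then have i: "i < length (succ G v)" and w: "walk G (succ G v ! i) q = Some u"
      by (auto split: if_splits)
    have "(v, succ G v ! i) \<in> edges (succ G)" using i by (simp add: edges_def)
    with Cons.IH[OF w] show ?case by (meson converse_rtrancl_into_rtrancl)
  qed
  then show "u \<in> reach (succ G) v" by (simp add: reach_def)
qed

inductive rep :: "('f, 'x) tgraph \<Rightarrow> nat \<Rightarrow> ('f, 'x) trm \<Rightarrow> bool" for G where
  rep_var: "lab G v = None \<Longrightarrow> varof G v = Some x \<Longrightarrow> succ G v = [] \<Longrightarrow> rep G v (Var x)"
| rep_fun: "lab G v = Some f \<Longrightarrow> length ts = length (succ G v) \<Longrightarrow>
     (\<forall>i<length ts. rep G (succ G v ! i) (ts ! i)) \<Longrightarrow> rep G v (Fun f ts)"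

lemma rep_functional: "rep G v s \<Longrightarrow> rep G v s' \<Longrightarrow> s = s'"
proof (induction arbitrary: s' rule: rep.induct)
  case (rep_var v x)
  then show ?case by (auto elim: rep.cases)
next
  case (rep_fun v f ts)
  from rep_fun.prems obtain ts' where s': "s' = Fun f ts'" "length ts' = length (succ G v)"
    "\<forall>i<length ts'. rep G (succ G v ! i) (ts' ! i)"
    using rep_fun.hyps(1) by (auto elim: rep.cases)
  have "ts = ts'"
    by (rule nth_equalityI) (use rep_fun s' in auto)
  then show ?case using s' by simp
qed

lemma rep_Fun_D: "rep G v (Fun f ts) \<Longrightarrow> lab G v = Some f \<and> length ts = length (succ G v) \<and>
     (\<forall>i<length ts. rep G (succ G v ! i) (ts ! i))"
  by (auto elim: rep.cases)

lemma rep_Var_D: "rep G v (Var x) \<Longrightarrow> lab G v = None \<and> varof G v = Some x \<and> succ G v = []"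
  by (auto elim: rep.cases)

lemma rep_walk: "rep G v t \<Longrightarrow> walk G v q = Some u \<Longrightarrow> valid_pos t q \<and> rep G u (subt t q)"
proof (induction q arbitrary: v t)
  case Nil
  then show ?case by simp
next
  case (Cons i q)
  then have i: "i < length (succ G v)" and w: "walk G (succ G v ! i) q = Some u"
    by (auto split: if_splits)
  show ?case
  proof (cases t)
    case (Var x)
    then show ?thesis using Cons.prems i by (auto dest: rep_Var_D)
  next
    case (Fun f ts)
    then have "length ts = length (succ G v)" "rep G (succ G v ! i) (ts ! i)"
      using rep_Fun_D Cons.prems i by metis+
    with Cons.IH[OF this(2) w] i Fun show ?thesis by simp
  qed
qed

lemma rep_walk_ex: "rep G v t \<Longrightarrow> valid_pos t q \<Longrightarrow> \<exists>u. walk G v q = Some u"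
proof (induction q arbitrary: v t)
  case Nil
  then show ?case by simp
next
  case (Cons i q)
  then obtain f ts where t: "t = Fun f ts" and i: "i < length ts" and vp: "valid_pos (ts ! i) q"
    by (cases t) auto
  then have "length ts = length (succ G v)" "rep G (succ G v ! i) (ts ! i)"
    using rep_Fun_D Cons.prems by metis+
  with Cons.IH[OF this(2) vp] i show ?case by simp
qed

lemma rep_unfold: "rep G v t \<Longrightarrow> finite (reach (succ G) v) \<Longrightarrow> card (reach (succ G) v) < k \<Longrightarrow>
   unfold_tg G k v = t"
proof (induction arbitrary: k rule: rep.induct)
  case (rep_var v x)
  then show ?case by (cases k) auto
next
  case (rep_fun v f ts)
  then obtain k' where k: "k = Suc k'" by (cases k) auto
  have repv: "rep G v (Fun f ts)" using rep_fun by (intro rep.rep_fun) auto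
  have "map (unfold_tg G k') (succ G v) = ts"
  proof (rule nth_equalityI)
    fix i assume "i < length (map (unfold_tg G k') (succ G v))"
    then have i: "i < length (succ G v)" by simp
    define c where "c = succ G v ! i"
    have sub: "reach (succ G) c \<subseteq> reach (succ G) v"
    proof
      fix u assume "u \<in> reach (succ G) c"
      then obtain q where "walk G c q = Some u" by (auto simp: reach_walk)
      then have "walk G v (i # q) = Some u" using i by (simp add: c_def)
      then show "u \<in> reach (succ G) v" unfolding reach_walk by blast
    qed
    have "v \<notin> reach (succ G) c"
    proof
      assume "v \<in> reach (succ G) c"
      then obtain q where "walk G c q = Some v" by (auto simp: reach_walk)
      moreover have "rep G c (ts ! i)" using rep_fun i by (simp add: c_def)
      ultimately have "valid_pos (ts ! i) q" "rep G v (subt (ts ! i) q)" using rep_walk by metis+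
      then have "Fun f ts = subt (ts ! i) q" using rep_functional repv by metis
      then have "size (Fun f ts) \<le> size (ts ! i)" using size_subt \<open>valid_pos (ts ! i) q\<close> by metis
      moreover have "size (ts ! i) < size (Fun f ts)" using size_nth_less i rep_fun.hyps(2) by metis
      ultimately show False by simp
    qed
    moreover have "v \<in> reach (succ G) v" by (simp add: reach_def)
    ultimately have "reach (succ G) c \<subset> reach (succ G) v" using sub by blast
    then have "card (reach (succ G) c) < card (reach (succ G) v)"
      using rep_fun.prems(1) by (simp add: psubset_card_mono)
    then have "card (reach (succ G) c) < k'" using rep_fun.prems(2) k by simp
    moreover have "finite (reach (succ G) c)" using sub rep_fun.prems(1) finite_subset by blast
    ultimately have "unfold_tg G k' c = ts ! i"
      using rep_fun i by (auto simp: c_def)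
    then show "map (unfold_tg G k') (succ G v) ! i = ts ! i" using i by (simp add: c_def)
  qed (use rep_fun.hyps in simp)
  then show ?case using k rep_fun.hyps(1) by simp
qed



definition inedges :: "('f, 'x) tgraph \<Rightarrow> nat \<Rightarrow> (nat \<times> nat) set" where
  "inedges G u = {(v, i). v \<in> verts G \<and> i < length (succ G v) \<and> succ G v ! i = u}"

definition uniq :: "('f \<Rightarrow> bool) \<Rightarrow> ('f, 'x) tgraph \<Rightarrow> bool" where
  "uniq con G \<longleftrightarrow> (\<forall>u s v i. u \<in> verts G \<longrightarrow> rep G u s \<longrightarrow> \<not> constr_term con s \<longrightarrow>
      (v, i) \<in> inedges G u \<longrightarrow> u \<noteq> root G \<and> (\<forall>v' i'. (v', i') \<in> inedges G u \<longrightarrow> v' = v \<and> i' = i))"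

definition good :: "('f \<Rightarrow> bool) \<Rightarrow> ('f, 'x) tgraph \<Rightarrow> ('f, 'x) trm \<Rightarrow> bool" where
  "good con G t \<longleftrightarrow> finite (verts G) \<and> verts G = reach (succ G) (root G) \<and> rep G (root G) t \<and> uniq con G"

lemma good_term_of: "good con G t \<Longrightarrow> term_of G = t"
  using rep_unfold[of G "root G" t "Suc (card (verts G))"]
  by (auto simp: term_of_def good_def simp del: unfold_tg.simps)

lemma good_walk_verts: "good con G t \<Longrightarrow> walk G (root G) q = Some u \<Longrightarrow> u \<in> verts G"
  unfolding good_def using reach_walk by blast

lemma good_verts_walk: "good con G t \<Longrightarrow> u \<in> verts G \<Longrightarrow> \<exists>q. walk G (root G) q = Some u"
  unfolding good_def using reach_walk by blast

lemma good_walk_closed: "good con G t \<Longrightarrow> v \<in> verts G \<Longrightarrow> walk G v q = Some u \<Longrightarrow> u \<in> verts G"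
proof -
  assume g: "good con G t" and v: "v \<in> verts G" and w: "walk G v q = Some u"
  obtain p where "walk G (root G) p = Some v" using good_verts_walk[OF g v] by blast
  then have "walk G (root G) (p @ q) = Some u" using w by (simp add: walk_append_Some)
  then show ?thesis using good_walk_verts[OF g] by blast
qed

lemma good_succ_closed: "good con G t \<Longrightarrow> v \<in> verts G \<Longrightarrow> set (succ G v) \<subseteq> verts G"
proof
  fix u assume g: "good con G t" and v: "v \<in> verts G" and "u \<in> set (succ G v)"
  then obtain i where "i < length (succ G v)" "succ G v ! i = u" by (auto simp: in_set_conv_nth)
  then have "walk G v [i] = Some u" by simp
  then show "u \<in> verts G" using good_walk_closed[OF g v] by blast
qed

lemma good_rep_walk: "good con G t \<Longrightarrow> walk G (root G) q = Some u \<Longrightarrow> valid_pos t q \<and> rep G u (subt t q)"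
  unfolding good_def using rep_walk by blast

lemma good_rep: "good con G t \<Longrightarrow> u \<in> verts G \<Longrightarrow> \<exists>s. rep G u s"
  using good_verts_walk good_rep_walk by metis

lemma walk_unique:
  assumes g: "good con G t"
  shows "walk G (root G) p = Some u \<Longrightarrow> walk G (root G) q = Some u \<Longrightarrow> rep G u s \<Longrightarrow>
     \<not> constr_term con s \<Longrightarrow> p = q"
proof (induction p arbitrary: u s q rule: rev_induct)
  case Nil
  then have u: "u = root G" by simp
  show ?case
  proof (cases q rule: rev_exhaust)
    case (snoc q' j)
    then obtain x where x: "walk G (root G) q' = Some x" "j < length (succ G x)" "succ G x ! j = u"
      using Nil.prems by (auto simp: walk_snoc)
    then have "(x, j) \<in> inedges G u" using good_walk_verts[OF g] by (auto simp: inedges_def)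
    moreover have "u \<in> verts G" using Nil.prems good_walk_verts[OF g] by blast
    ultimately have "u \<noteq> root G" using g Nil.prems unfolding good_def uniq_def by blast
    then show ?thesis using u by simp
  qed simp
next
  case (snoc i p')
  obtain x where x: "walk G (root G) p' = Some x" "i < length (succ G x)" "succ G x ! i = u"
    using snoc.prems by (auto simp: walk_snoc)
  have ux: "(x, i) \<in> inedges G u" using x good_walk_verts[OF g] by (auto simp: inedges_def)
  have uv: "u \<in> verts G" using snoc.prems good_walk_verts[OF g] by blast
  have U: "u \<noteq> root G \<and> (\<forall>v' i'. (v', i') \<in> inedges G u \<longrightarrow> v' = x \<and> i' = i)"
    using g snoc.prems ux uv unfolding good_def uniq_def by blast
  show ?case
  proof (cases q rule: rev_exhaust)
    case Nil
    then show ?thesis using snoc.prems U by simp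
  next
    case (snoc q' j)
    then obtain y where y: "walk G (root G) q' = Some y" "j < length (succ G y)" "succ G y ! j = u"
      using snoc.prems by (auto simp: walk_snoc)
    then have "(y, j) \<in> inedges G u" using good_walk_verts[OF g] by (auto simp: inedges_def)
    then have yx: "y = x" "j = i" using U by auto
    obtain sx where sx: "rep G x sx" using good_rep_walk[OF g x(1)] by blast
    have "walk G x [i] = Some u" using x by simp
    then have "valid_pos sx [i]" "rep G u (subt sx [i])" using rep_walk[OF sx] by blast+
    then have "s = subt sx [i]" using snoc.prems rep_functional by metis
    then have "\<not> constr_term con sx" using snoc.prems(4) constr_subt \<open>valid_pos sx [i]\<close> by metis
    then have "p' = q'" using snoc.IH[OF x(1) _ sx] y yx by simp
    then show ?thesis using snoc yx by simp
  qed
qed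

lemma walk_unique_from:
  assumes g: "good con G t" and v: "v \<in> verts G"
    and "walk G v q1 = Some u" "walk G v q2 = Some u" "rep G u s" "\<not> constr_term con s"
  shows "q1 = q2"
proof -
  obtain p where p: "walk G (root G) p = Some v" using good_verts_walk[OF g v] by blast
  have "walk G (root G) (p @ q1) = Some u" "walk G (root G) (p @ q2) = Some u"
    using assms(3,4) p by (simp_all add: walk_append_Some)
  then have "p @ q1 = p @ q2"
    using walk_unique[OF g _ _ assms(5,6)] by blast
  then show ?thesis by simp
qed

lemma all_Suc_split: "(\<forall>i. P i) \<longleftrightarrow> P 0 \<and> (\<forall>j. P (Suc j))"
  by (metis not0_implies_Suc)

lemma is_path_Cons: "is_path G (a # vs) \<longleftrightarrow> a \<in> verts G \<and>
   (vs = [] \<or> (is_path G vs \<and> hd vs \<in> set (succ G a)))"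
proof (cases vs)
  case Nil
  then show ?thesis by (simp add: is_path_def)
next
  case (Cons b vs')
  have "is_path G (a # vs) \<longleftrightarrow> a \<in> verts G \<and> set vs \<subseteq> verts G \<and>
      (\<forall>i. Suc i < length (a # vs) \<longrightarrow> (a # vs) ! Suc i \<in> set (succ G ((a # vs) ! i)))"
    by (simp add: is_path_def)
  also have "(\<forall>i. Suc i < length (a # vs) \<longrightarrow> (a # vs) ! Suc i \<in> set (succ G ((a # vs) ! i))) \<longleftrightarrow>
     b \<in> set (succ G a) \<and> (\<forall>j. Suc j < length vs \<longrightarrow> vs ! Suc j \<in> set (succ G (vs ! j)))"
    by (subst all_Suc_split) (simp add: Cons)
  finally show ?thesis using Cons by (auto simp: is_path_def)
qed

lemma constructor_path_Cons: "constructor_path con G (a # vs) \<longleftrightarrow>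
   (\<exists>c. lab G a = Some c \<and> con c) \<and> constructor_path con G vs"
  by (auto simp: constructor_path_def)

lemma path_constr: "rep G a s \<Longrightarrow> constr_term con s \<Longrightarrow> is_path G vs \<Longrightarrow> hd vs = a \<Longrightarrow>
    constructor_path con G vs"
proof (induction vs arbitrary: a s)
  case Nil
  then show ?case by (simp add: is_path_def)
next
  case (Cons a' vs)
  then have a: "a' = a" by simp
  from Cons.prems obtain c ts where s: "s = Fun c ts" by (cases s) (auto simp: constr_Var)
  then have c: "con c" "\<forall>t\<in>set ts. constr_term con t" using Cons.prems by (auto simp: constr_Fun)
  have L: "lab G a = Some c" "length ts = length (succ G a)" "\<forall>i<length ts. rep G (succ G a ! i) (ts ! i)"
    using rep_Fun_D Cons.prems s by metis+
  show ?case
  proof (cases "vs = []")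
    case True
    then show ?thesis using a L c by (simp add: constructor_path_def)
  next
    case False
    then have P: "is_path G vs" "hd vs \<in> set (succ G a)" using Cons.prems a is_path_Cons by metis+
    then obtain j where j: "j < length (succ G a)" "succ G a ! j = hd vs" by (auto simp: in_set_conv_nth)
    then have "rep G (hd vs) (ts ! j)" "constr_term con (ts ! j)" using L c by (auto simp: nth_mem)
    then have "constructor_path con G vs" using Cons.IH P by blast
    then show ?thesis using a L c by (simp add: constructor_path_Cons)
  qed
qed

lemma constr_from_paths: "rep G a s \<Longrightarrow> (\<forall>v\<in>verts G. set (succ G v) \<subseteq> verts G) \<Longrightarrow> a \<in> verts G \<Longrightarrow>
    (\<forall>vs. is_path G vs \<and> hd vs = a \<longrightarrow> constructor_path con G vs) \<Longrightarrow> constr_term con s"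
proof (induction rule: rep.induct)
  case (rep_var v x)
  have "is_path G [v]" using rep_var by (simp add: is_path_Cons)
  then have "constructor_path con G [v]" using rep_var by auto
  then show ?case using rep_var by (simp add: constructor_path_def)
next
  case (rep_fun v f ts)
  have "is_path G [v]" using rep_fun by (simp add: is_path_Cons)
  then have "constructor_path con G [v]" using rep_fun by auto
  then have cf: "con f" using rep_fun by (simp add: constructor_path_def)
  have "\<forall>i<length ts. constr_term con (ts ! i)"
  proof (intro allI impI)
    fix i assume i: "i < length ts"
    define c where "c = succ G v ! i"
    have ss: "set (succ G v) \<subseteq> verts G" using rep_fun.prems(1,2) by blast
    have cv: "c \<in> verts G" using ss i rep_fun.hyps(2) nth_mem[of i "succ G v"]
      unfolding c_def by (metis subsetD)
    have cp: "\<forall>vs. is_path G vs \<and> hd vs = c \<longrightarrow> constructor_path con G vs"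
    proof (intro allI impI)
      fix vs assume vs: "is_path G vs \<and> hd vs = c"
      then have "is_path G (v # vs)" using rep_fun.prems i rep_fun.hyps(2)
        by (auto simp: is_path_Cons c_def nth_mem)
      then have "constructor_path con G (v # vs)" using rep_fun.prems by auto
      then show "constructor_path con G vs" by (simp add: constructor_path_Cons)
    qed
    have "rep G c (ts ! i) \<and> (c \<in> verts G \<longrightarrow>
          (\<forall>vs. is_path G vs \<and> hd vs = c \<longrightarrow> constructor_path con G vs) \<longrightarrow> constr_term con (ts ! i))"
      using rep_fun.IH i rep_fun.hyps(2) rep_fun.prems(1) unfolding c_def by auto
    then show "constr_term con (ts ! i)" using cp cv by blast
  qed
  then show ?case unfolding constr_Fun using cf by (metis in_set_conv_nth)
qed




lemma valid_pos_single: "valid_pos t [i] \<longleftrightarrow> (\<exists>g ts. t = Fun g ts \<and> i < length ts)"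
  by (cases t) auto

lemma subt_snoc: "valid_pos t (q @ [i]) \<Longrightarrow> \<exists>g ts. subt t q = Fun g ts \<and> i < length ts \<and> subt t (q @ [i]) = ts ! i"
proof -
  assume a: "valid_pos t (q @ [i])"
  then have 1: "valid_pos t q" "valid_pos (subt t q) [i]" using valid_pos_append[of t q "[i]"] by simp_all
  then obtain g ts where 2: "subt t q = Fun g ts" "i < length ts" using valid_pos_single[of "subt t q" i] by auto
  have "subt t (q @ [i]) = subt (subt t q) [i]" using subt_append[OF 1(1)] by simp
  then show ?thesis using 2 by simp
qed

lemma vars_pos: "x \<in> vars t \<Longrightarrow> \<exists>p. valid_pos t p \<and> subt t p = Var x"
proof (induction t)
  case (Var y)
  then show ?case by (intro exI[of _ "[]"]) simp
next
  case (Fun f ts)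
  then obtain t' where t': "t' \<in> set ts" "x \<in> vars t'" by auto
  then obtain i where i: "i < length ts" "ts ! i = t'" by (auto simp: in_set_conv_nth)
  obtain p where "valid_pos t' p" "subt t' p = Var x" using Fun.IH t' by blast
  then show ?case using i by (intro exI[of _ "i # p"]) auto
qed

lemma pos_vars: "valid_pos t p \<Longrightarrow> subt t p = Var x \<Longrightarrow> x \<in> vars t"
  by (induction t p rule: valid_pos.induct) (auto simp: nth_mem)

lemma varpos: "x \<in> vars l \<Longrightarrow> varpos l x \<in> poss l \<and> subt l (varpos l x) = Var x"
  unfolding varpos_def poss_def using vars_pos[of x l] by (metis (mono_tags, lifting) mem_Collect_eq someI_ex)

lemma varpos_linear: "linear_trm l \<Longrightarrow> q \<in> poss l \<Longrightarrow> subt l q = Var x \<Longrightarrow> varpos l x = q"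
  using varpos[of x l] pos_vars[of l q x] unfolding linear_trm_def poss_def by auto

lemma rg_gsucc_False: "gsucc (rule_graph l r) (False, q) =
   (case subt l q of Fun g ts \<Rightarrow> map (\<lambda>i. (False, q @ [i])) [0..<length ts] | Var x \<Rightarrow> [])"
  by (simp add: rule_graph_def)

lemma rg_gsucc_True: "gsucc (rule_graph l r) (True, q) =
   (case subt r q of Fun g ts \<Rightarrow> map (\<lambda>i. rnode l r (q @ [i])) [0..<length ts] | Var x \<Rightarrow> [])"
  by (simp add: rule_graph_def)

lemma rg_glab_False: "glab (rule_graph l r) (False, q) = (case subt l q of Fun g ts \<Rightarrow> Some g | Var x \<Rightarrow> None)"
  by (simp add: rule_graph_def)

lemma rg_glab_True: "glab (rule_graph l r) (True, q) = (case subt r q of Fun g ts \<Rightarrow> Some g | Var x \<Rightarrow> None)"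
  by (simp add: rule_graph_def)

lemma rg_roots: "lroot (rule_graph l r) = (False, [])" "rroot (rule_graph l r) = rnode l r []"
  by (simp_all add: rule_graph_def)

lemma rnode_Var: "subt r q = Var x \<Longrightarrow> rnode l r q = (False, varpos l x)"
  by (simp add: rnode_def)
lemma rnode_Fun: "subt r q = Fun g ts \<Longrightarrow> rnode l r q = (True, q)"
  by (simp add: rnode_def)

lemma reach_lroot: "reach (gsucc (rule_graph l r)) (False, []) = {(False, q) | q. q \<in> poss l}"
proof
  show "reach (gsucc (rule_graph l r)) (False, []) \<subseteq> {(False, q) | q. q \<in> poss l}"
  proof
    fix y assume "y \<in> reach (gsucc (rule_graph l r)) (False, [])"
    then have "((False, []), y) \<in> (edges (gsucc (rule_graph l r)))\<^sup>*" by (simp add: reach_def)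
    then show "y \<in> {(False, q) | q. q \<in> poss l}"
    proof (induction rule: rtrancl_induct)
      case base
      then show ?case by (simp add: poss_def)
    next
      case (step a b)
      then obtain q where a: "a = (False, q)" "q \<in> poss l" by blast
      from step(2) a have b: "b \<in> set (gsucc (rule_graph l r) (False, q))" by (simp add: edges_def)
      show ?case
      proof (cases "subt l q")
        case (Var x)
        then show ?thesis using b by (simp add: rg_gsucc_False)
      next
        case (Fun g ts)
        then obtain i where i: "i < length ts" "b = (False, q @ [i])" using b by (auto simp: rg_gsucc_False)
        then have "valid_pos l (q @ [i])" using a Fun by (simp add: valid_pos_append poss_def)
        then show ?thesis using i by (auto simp: poss_def)
      qed
    qed
  qed
next
  show "{(False, q) | q. q \<in> poss l} \<subseteq> reach (gsucc (rule_graph l r)) (False, [])"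
  proof -
    have "valid_pos l q \<Longrightarrow> ((False, []), (False, q)) \<in> (edges (gsucc (rule_graph l r)))\<^sup>*" for q
    proof (induction q rule: rev_induct)
      case Nil
      then show ?case by simp
    next
      case (snoc i q)
      then obtain g ts where gt: "subt l q = Fun g ts" "i < length ts" using subt_snoc by blast
      have "valid_pos l q" using snoc.prems valid_pos_append by blast
      then have 1: "((False, []), (False, q)) \<in> (edges (gsucc (rule_graph l r)))\<^sup>*" using snoc.IH by blast
      have "((False, q), (False, q @ [i])) \<in> edges (gsucc (rule_graph l r))"
        using gt by (auto simp: edges_def rg_gsucc_False)
      then show ?case by (rule rtrancl_into_rtrancl[OF 1])
    qed
    then show ?thesis by (auto simp: reach_def poss_def)
  qed
qed

definition rset :: "('f, 'x) trm \<Rightarrow> ('f, 'x) trm \<Rightarrow> (bool \<times> nat list) set" where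
  "rset l r = {(True, q) | q. q \<in> poss r \<and> (\<exists>g ts. subt r q = Fun g ts)}"

lemma rnode_in: "vars r \<subseteq> vars l \<Longrightarrow> q \<in> poss r \<Longrightarrow>
   rnode l r q \<in> rset l r \<union> {(False, p) | p. p \<in> poss l}"
proof (cases "subt r q")
  case (Var x)
  assume "vars r \<subseteq> vars l" "q \<in> poss r"
  then have "x \<in> vars l" using pos_vars[of r q x] Var by (auto simp: poss_def)
  then show ?thesis using varpos[of x l] Var by (simp add: rnode_Var)
next
  case (Fun g ts)
  assume "q \<in> poss r"
  then show ?thesis using Fun by (simp add: rnode_Fun rset_def)
qed

lemma reach_rroot: assumes vr: "vars r \<subseteq> vars l"
  shows "reach (gsucc (rule_graph l r)) (rnode l r []) \<subseteq> rset l r \<union> {(False, p) | p. p \<in> poss l}"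
proof
  fix y assume "y \<in> reach (gsucc (rule_graph l r)) (rnode l r [])"
  then have "(rnode l r [], y) \<in> (edges (gsucc (rule_graph l r)))\<^sup>*" by (simp add: reach_def)
  then show "y \<in> rset l r \<union> {(False, p) | p. p \<in> poss l}"
  proof (induction rule: rtrancl_induct)
    case base
    then show ?case using rnode_in[OF vr, of "[]"] by (simp add: poss_def)
  next
    case (step a b)
    from step(2) have b: "b \<in> set (gsucc (rule_graph l r) a)" by (simp add: edges_def)
    from step(3) show ?case
    proof
      assume "a \<in> rset l r"
      then obtain q g ts where a: "a = (True, q)" "q \<in> poss r" "subt r q = Fun g ts" by (auto simp: rset_def)
      then obtain i where i: "i < length ts" "b = rnode l r (q @ [i])" using b by (auto simp: rg_gsucc_True)
      then have "q @ [i] \<in> poss r" using a by (simp add: valid_pos_append poss_def)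
      then show ?thesis using rnode_in[OF vr] i by simp
    next
      assume "a \<in> {(False, p) | p. p \<in> poss l}"
      then obtain q where a: "a = (False, q)" "q \<in> poss l" by blast
      show ?thesis
      proof (cases "subt l q")
        case (Var x)
        then show ?thesis using a b by (simp add: rg_gsucc_False)
      next
        case (Fun g ts)
        then obtain i where i: "i < length ts" "b = (False, q @ [i])" using a b by (auto simp: rg_gsucc_False)
        then have "valid_pos l (q @ [i])" using a Fun by (simp add: valid_pos_append poss_def)
        then show ?thesis using i by (auto simp: poss_def)
      qed
    qed
  qed
qed

lemma rset_reach: "(True, q) \<in> rset l r \<Longrightarrow> (True, q) \<in> reach (gsucc (rule_graph l r)) (rnode l r [])"
proof -
  assume "(True, q) \<in> rset l r"
  then have "valid_pos r q" "\<exists>g ts. subt r q = Fun g ts" by (auto simp: rset_def poss_def)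
  then have "(rnode l r [], (True, q)) \<in> (edges (gsucc (rule_graph l r)))\<^sup>*"
  proof (induction q rule: rev_induct)
    case Nil
    then show ?case by (auto simp: rnode_Fun)
  next
    case (snoc i q)
    then obtain g ts where gt: "subt r q = Fun g ts" "i < length ts" using subt_snoc by blast
    have "valid_pos r q" using snoc.prems valid_pos_append by blast
    then have 1: "(rnode l r [], (True, q)) \<in> (edges (gsucc (rule_graph l r)))\<^sup>*" using snoc.IH gt by blast
    have "rnode l r (q @ [i]) = (True, q @ [i])" using snoc.prems(2) by (auto simp: rnode_Fun)
    then have "((True, q), (True, q @ [i])) \<in> edges (gsucc (rule_graph l r))"
      using gt by (force simp: edges_def rg_gsucc_True)
    then show ?case by (rule rtrancl_into_rtrancl[OF 1])
  qed
  then show ?thesis by (simp add: reach_def)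
qed

lemma new_part_eq: "vars r \<subseteq> vars l \<Longrightarrow> new_part (rule_graph l r) = rset l r"
proof
  assume vr: "vars r \<subseteq> vars l"
  show "new_part (rule_graph l r) \<subseteq> rset l r"
    using reach_rroot[OF vr] reach_lroot[of l r] by (auto simp: new_part_def rg_roots)
  show "rset l r \<subseteq> new_part (rule_graph l r)"
  proof
    fix y assume y: "y \<in> rset l r"
    then obtain q where "y = (True, q)" by (auto simp: rset_def)
    then show "y \<in> new_part (rule_graph l r)"
      using rset_reach[of q l r] y reach_lroot[of l r] by (auto simp: new_part_def rg_roots)
  qed
qed




locale fire_setting =
  fixes con :: "'f \<Rightarrow> bool" and G :: "('f, 'x) tgraph" and t :: "('f, 'x) trm"
    and l r :: "('f, 'x) trm" and \<phi> \<iota> :: "bool \<times> nat list \<Rightarrow> nat"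
  assumes good: "good con G t"
    and lhs: "\<exists>f ps. l = Fun f ps \<and> \<not> con f"
    and lin: "linear_trm l"
    and vr: "vars r \<subseteq> vars l"
    and redex: "is_redex con (rule_graph l r) \<phi> G"
    and fresh: "fresh_for (rule_graph l r) \<iota> G"
begin

abbreviation "H \<equiv> rule_graph l r"
definition "w = \<phi> (False, [])"
definition "\<sigma> x = (THE s. rep G (\<phi> (False, varpos l x)) s)"
definition "a x = \<phi> (False, varpos l x)"
definition "\<psi> v = (if v \<in> reach (gsucc H) (lroot H) then \<phi> v else \<iota> v)"
definition "s' = \<psi> (rroot H)"
definition "rd v = (if v = w then s' else v)"
definition "G' = fire H \<phi> \<iota> G"

lemma reachL: "reach (gsucc H) (lroot H) = {(False, q) | q. q \<in> poss l}"
  using reach_lroot by (simp add: rg_roots)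

lemma phi_verts: "q \<in> poss l \<Longrightarrow> \<phi> (False, q) \<in> verts G"
  using redex reachL unfolding is_redex_def by blast

lemma phi_lab: "q \<in> poss l \<Longrightarrow> subt l q = Fun g ts \<Longrightarrow>
   lab G (\<phi> (False, q)) = Some g \<and> succ G (\<phi> (False, q)) = map (\<lambda>i. \<phi> (False, q @ [i])) [0..<length ts]"
proof -
  assume q: "q \<in> poss l" and s: "subt l q = Fun g ts"
  have "(False, q) \<in> reach (gsucc H) (lroot H)" using q reachL by blast
  moreover have "glab H (False, q) = Some g" using s by (simp add: rg_glab_False)
  ultimately have "lab G (\<phi> (False, q)) = Some g \<and> succ G (\<phi> (False, q)) = map \<phi> (gsucc H (False, q))"
    using redex unfolding is_redex_def by blast
  then show ?thesis using s by (simp add: rg_gsucc_False)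
qed

lemma phi_var: "q \<in> poss l \<Longrightarrow> subt l q = Var x \<Longrightarrow>
   (\<forall>vs. is_path G vs \<and> hd vs = \<phi> (False, q) \<longrightarrow> constructor_path con G vs)"
proof -
  assume q: "q \<in> poss l" and s: "subt l q = Var x"
  have "(False, q) \<in> reach (gsucc H) (lroot H)" using q reachL by blast
  moreover have "glab H (False, q) = None" using s by (simp add: rg_glab_False)
  ultimately show ?thesis using redex unfolding is_redex_def by blast
qed

lemma verts_closed: "\<forall>v\<in>verts G. set (succ G v) \<subseteq> verts G"
  using good_succ_closed[OF good] by blast

lemma sigma_rep: "x \<in> vars l \<Longrightarrow> rep G (a x) (\<sigma> x) \<and> constr_term con (\<sigma> x)"
proof -
  assume x: "x \<in> vars l"
  then have vp: "varpos l x \<in> poss l" "subt l (varpos l x) = Var x" using varpos[OF x] by auto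
  then have av: "a x \<in> verts G" using phi_verts by (simp add: a_def)
  then obtain s where s: "rep G (a x) s" using good_rep[OF good] by blast
  then have "rep G (a x) (\<sigma> x)" unfolding \<sigma>_def a_def[symmetric] using rep_functional
    by (metis theI)
  moreover have "constr_term con (\<sigma> x)"
    using constr_from_paths[OF calculation verts_closed av] phi_var[OF vp] by (simp add: a_def)
  ultimately show ?thesis by blast
qed

lemma match_aux: "\<forall>q. q \<in> poss l \<longrightarrow> subt l q = s \<longrightarrow> rep G (\<phi> (False, q)) (subst \<sigma> s)"
proof (induction s)
  case (Var x)
  show ?case
  proof (intro allI impI)
    fix q assume q: "q \<in> poss l" "subt l q = Var x"
    then have "x \<in> vars l" using pos_vars by (auto simp: poss_def)
    moreover have "varpos l x = q" using varpos_linear[OF lin q] .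
    ultimately show "rep G (\<phi> (False, q)) (subst \<sigma> (Var x))" using sigma_rep[of x] by (simp add: a_def)
  qed
next
  case (Fun g ts)
  show ?case
  proof (intro allI impI)
    fix q assume q: "q \<in> poss l" "subt l q = Fun g ts"
    note L = phi_lab[OF q]
    have ch: "\<forall>i<length ts. rep G (\<phi> (False, q @ [i])) (subst \<sigma> (ts ! i))"
    proof (intro allI impI)
      fix i assume i: "i < length ts"
      have "valid_pos l (q @ [i])" using q i by (simp add: valid_pos_append poss_def)
      moreover have "subt l (q @ [i]) = ts ! i" using q i by (simp add: subt_append poss_def)
      ultimately show "rep G (\<phi> (False, q @ [i])) (subst \<sigma> (ts ! i))"
        using Fun.IH[of "ts ! i"] i by (simp add: nth_mem poss_def)
    qed
    show "rep G (\<phi> (False, q)) (subst \<sigma> (Fun g ts))"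
      using L ch by (auto intro!: rep_fun)
  qed
qed

lemma match: "q \<in> poss l \<Longrightarrow> rep G (\<phi> (False, q)) (subst \<sigma> (subt l q))"
  using match_aux by blast

lemma w_props: "w \<in> verts G" "rep G w (subst \<sigma> l)" "\<not> constr_term con (subst \<sigma> l)"
proof -
  have "[] \<in> poss l" by (simp add: poss_def)
  then show "w \<in> verts G" "rep G w (subst \<sigma> l)" using phi_verts[of "[]"] match[of "[]"] by (auto simp: w_def)
  show "\<not> constr_term con (subst \<sigma> l)" using lhs by (auto simp: constr_Fun)
qed

lemma N_eq: "new_part H = rset l r"
  using new_part_eq[OF vr] .

lemma fresh_inj: "inj_on \<iota> (rset l r)" and fresh_disj: "\<iota> ` rset l r \<inter> verts G = {}"
  using fresh N_eq by (auto simp: fresh_for_def)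

lemma fresh_notin: "y \<in> rset l r \<Longrightarrow> \<iota> y \<notin> verts G"
  using fresh_disj by blast

lemma G'_root: "root G' = rd (root G)"
  by (simp add: G'_def fire_def Let_def rd_def s'_def \<psi>_def w_def rg_roots)

lemma G'_verts: "verts G' = reach (succ G') (root G')"
  by (simp add: G'_def fire_def Let_def)

lemma G'_old: "v \<in> verts G \<Longrightarrow> succ G' v = map rd (succ G v) \<and> lab G' v = lab G v \<and> varof G' v = varof G v"
proof -
  assume v: "v \<in> verts G"
  then have nn: "\<not> (\<exists>y\<in>new_part H. \<iota> y = v)" using fresh_disj N_eq by blast
  show ?thesis using nn
    by (simp add: G'_def fire_def Let_def rd_def s'_def \<psi>_def w_def rg_roots)
qed

lemma G'_new: "(True, q) \<in> rset l r \<Longrightarrow> subt r q = Fun g ts \<Longrightarrow>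
   lab G' (\<iota> (True, q)) = Some g \<and>
   succ G' (\<iota> (True, q)) = map (\<lambda>i. rd (\<psi> (rnode l r (q @ [i])))) [0..<length ts] \<and>
   varof G' (\<iota> (True, q)) = None"
proof -
  assume q: "(True, q) \<in> rset l r" and s: "subt r q = Fun g ts"
  have ex: "\<exists>y\<in>new_part H. \<iota> y = \<iota> (True, q)" using q N_eq by blast
  have th: "(THE y. y \<in> new_part H \<and> \<iota> y = \<iota> (True, q)) = (True, q)"
    using q N_eq fresh_inj by (auto intro!: the_equality dest: inj_onD)
  show ?thesis using ex th s
    by (simp add: G'_def fire_def Let_def rd_def s'_def \<psi>_def w_def rg_roots rg_glab_True rg_gsucc_True)
qed

lemma a_props: "x \<in> vars l \<Longrightarrow> a x \<in> verts G \<and> (\<forall>q. walk G (a x) q \<noteq> Some w)"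
proof -
  assume x: "x \<in> vars l"
  then have av: "a x \<in> verts G" using varpos[OF x] phi_verts by (simp add: a_def)
  have "walk G (a x) q \<noteq> Some w" for q
  proof
    assume "walk G (a x) q = Some w"
    then have "valid_pos (\<sigma> x) q" "rep G w (subt (\<sigma> x) q)" using rep_walk sigma_rep[OF x] by blast+
    then have "subst \<sigma> l = subt (\<sigma> x) q" using rep_functional w_props(2) by blast
    then have "constr_term con (subst \<sigma> l)" using constr_subt sigma_rep[OF x] \<open>valid_pos (\<sigma> x) q\<close> by metis
    then show False using w_props(3) by blast
  qed
  then show ?thesis using av by blast
qed

lemma a_ne_w: "x \<in> vars l \<Longrightarrow> a x \<noteq> w"
  using a_props[of x] by (metis walk.simps(1))

lemma rd_old: "v \<noteq> w \<Longrightarrow> rd v = v"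
  by (simp add: rd_def)

lemma rd_a: "x \<in> vars l \<Longrightarrow> rd (a x) = a x"
  using a_ne_w rd_old by blast

lemma rd_iota: "y \<in> rset l r \<Longrightarrow> rd (\<iota> y) = \<iota> y"
  using fresh_notin w_props(1) rd_old by metis

lemma psi_var: "q \<in> poss r \<Longrightarrow> subt r q = Var x \<Longrightarrow> x \<in> vars l \<and> \<psi> (rnode l r q) = a x"
proof -
  assume q: "q \<in> poss r" "subt r q = Var x"
  then have x: "x \<in> vars l" using pos_vars[of r q x] vr by (auto simp: poss_def)
  then have "(False, varpos l x) \<in> reach (gsucc H) (lroot H)" using varpos[OF x] reachL by blast
  then show ?thesis using q x by (simp add: rnode_Var \<psi>_def a_def)
qed

lemma psi_fun: "subt r q = Fun g ts \<Longrightarrow> \<psi> (rnode l r q) = \<iota> (True, q)"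
  using reachL by (simp add: rnode_Fun \<psi>_def)

lemma NA: "rep G v s \<Longrightarrow> v \<in> verts G \<Longrightarrow> (\<forall>q. walk G v q \<noteq> Some w) \<Longrightarrow> rep G' v s"
proof (induction rule: rep.induct)
  case (rep_var v x)
  then show ?case using G'_old[of v] by (auto intro: rep.rep_var)
next
  case (rep_fun v f ts)
  have ch: "\<forall>i<length (succ G v). succ G v ! i \<in> verts G \<and> (\<forall>q. walk G (succ G v ! i) q \<noteq> Some w)"
  proof (intro allI impI, rule conjI)
    fix i assume i: "i < length (succ G v)"
    show "succ G v ! i \<in> verts G" using verts_closed rep_fun.prems(1) i by (meson nth_mem subsetD)
    show "\<forall>q. walk G (succ G v ! i) q \<noteq> Some w"
    proof (intro allI notI)
      fix q assume "walk G (succ G v ! i) q = Some w"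
      then have "walk G v (i # q) = Some w" using i by simp
      then show False using rep_fun.prems(2) by blast
    qed
  qed
  have m0: "\<forall>u\<in>set (succ G v). rd u = u"
  proof
    fix u assume "u \<in> set (succ G v)"
    then obtain i where i: "i < length (succ G v)" "u = succ G v ! i" by (auto simp: in_set_conv_nth)
    then have "u \<noteq> w" using ch by (metis walk.simps(1))
    then show "rd u = u" by (rule rd_old)
  qed
  have m: "map rd (succ G v) = succ G v" using m0 by (simp add: map_idI)
  have "\<forall>i<length ts. rep G' (succ G v ! i) (ts ! i)"
    using rep_fun.IH ch rep_fun.hyps(2) by auto
  then show ?case using G'_old[OF rep_fun.prems(1)] m rep_fun.hyps(1,2) by (auto intro: rep.rep_fun)
qed

lemma VAL: "x \<in> vars l \<Longrightarrow> rep G' (a x) (\<sigma> x)"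
  using NA sigma_rep a_props by blast

lemma NEW_aux: "\<forall>q. (True, q) \<in> rset l r \<longrightarrow> subt r q = s \<longrightarrow> rep G' (\<iota> (True, q)) (subst \<sigma> s)"
proof (induction s)
  case (Var x)
  then show ?case by (auto simp: rset_def)
next
  case (Fun g ts)
  show ?case
  proof (intro allI impI)
    fix q assume q: "(True, q) \<in> rset l r" "subt r q = Fun g ts"
    note N = G'_new[OF q]
    have qp: "q \<in> poss r" using q by (auto simp: rset_def)
    have "\<forall>i<length ts. rep G' (rd (\<psi> (rnode l r (q @ [i])))) (subst \<sigma> (ts ! i))"
    proof (intro allI impI)
      fix i assume i: "i < length ts"
      have qi: "q @ [i] \<in> poss r" using qp q i by (simp add: valid_pos_append poss_def)
      have si: "subt r (q @ [i]) = ts ! i" using qp q i by (simp add: subt_append poss_def)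
      show "rep G' (rd (\<psi> (rnode l r (q @ [i])))) (subst \<sigma> (ts ! i))"
      proof (cases "ts ! i")
        case (Var x)
        then have "x \<in> vars l" "\<psi> (rnode l r (q @ [i])) = a x" using psi_var[OF qi] si by auto
        then show ?thesis using Var VAL rd_a by simp
      next
        case (Fun g' ts')
        then have 1: "\<psi> (rnode l r (q @ [i])) = \<iota> (True, q @ [i])" using psi_fun si by simp
        have 2: "(True, q @ [i]) \<in> rset l r" using qi si Fun by (auto simp: rset_def)
        then have "rep G' (\<iota> (True, q @ [i])) (subst \<sigma> (ts ! i))" using Fun.IH[of "ts ! i"] si i
          by (simp add: nth_mem)
        then show ?thesis using 1 rd_iota[OF 2] by simp
      qed
    qed
    then show "rep G' (\<iota> (True, q)) (subst \<sigma> (Fun g ts))"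
      using N by (auto intro!: rep.rep_fun)
  qed
qed

lemma S': "rep G' s' (subst \<sigma> r)"
proof (cases r)
  case (Var x)
  have "[] \<in> poss r" by (simp add: poss_def)
  moreover have "subt r [] = Var x" using Var by simp
  ultimately have x: "x \<in> vars l" and e: "\<psi> (rnode l r []) = a x" using psi_var[of "[]" x] by auto
  have e2: "s' = a x" using e by (simp add: s'_def rg_roots)
  have e3: "subst \<sigma> r = \<sigma> x" using Var by simp
  show ?thesis unfolding e2 e3 using VAL[OF x] .
next
  case (Fun g ts)
  then have sr: "subt r [] = Fun g ts" by simp
  then have "(True, []) \<in> rset l r" by (auto simp: rset_def poss_def)
  then have "rep G' (\<iota> (True, [])) (subst \<sigma> (subt r []))" using NEW_aux by blast
  moreover have "s' = \<iota> (True, [])" using psi_fun[OF sr] by (simp add: s'_def rg_roots)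
  ultimately show ?thesis by simp
qed

lemma ANC: "rep G v s \<Longrightarrow> v \<in> verts G \<Longrightarrow> walk G v q = Some w \<Longrightarrow>
   rep G' (rd v) (replace s q (subst \<sigma> r))"
proof (induction q arbitrary: v s)
  case Nil
  then have "v = w" by simp
  then have "s = subst \<sigma> l" using Nil.prems(1) w_props(2) rep_functional by blast
  then show ?case using S' \<open>v = w\<close> by (simp add: rd_def)
next
  case (Cons i q)
  from Cons.prems(3) have i: "i < length (succ G v)" and wq: "walk G (succ G v ! i) q = Some w"
    by (auto split: if_splits)
  have "v \<noteq> w"
  proof
    assume "v = w"
    then have "walk G v [] = Some w" by simp
    then have "[] = i # q"
      using walk_unique_from[OF good Cons.prems(2) _ Cons.prems(3) w_props(2) w_props(3)] by blast
    then show False by simp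
  qed
  then have rdv: "rd v = v" by (rule rd_old)
  obtain f ts where s: "s = Fun f ts"
    using Cons.prems(1) i by (cases s) (auto dest: rep_Var_D)
  note F = rep_Fun_D[OF Cons.prems(1)[unfolded s]]
  note O = G'_old[OF Cons.prems(2)]
  have civ: "\<And>j. j < length (succ G v) \<Longrightarrow> succ G v ! j \<in> verts G"
    using verts_closed Cons.prems(2) by (meson nth_mem subsetD)
  have other: "\<And>j. j < length (succ G v) \<Longrightarrow> j \<noteq> i \<Longrightarrow> \<forall>q'. walk G (succ G v ! j) q' \<noteq> Some w"
  proof (intro allI notI)
    fix j q' assume j: "j < length (succ G v)" "j \<noteq> i" and wj: "walk G (succ G v ! j) q' = Some w"
    have "walk G v (j # q') = Some w" using j wj by simp
    then have "j # q' = i # q"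
      using walk_unique_from[OF good Cons.prems(2) _ Cons.prems(3) w_props(2) w_props(3)] by blast
    then show False using j by simp
  qed
  have IHi: "rep G' (rd (succ G v ! i)) (replace (ts ! i) q (subst \<sigma> r))"
    using Cons.IH[OF _ civ[OF i] wq] F i by auto
  have ch: "\<forall>j<length (ts[i := replace (ts ! i) q (subst \<sigma> r)]).
      rep G' (succ G' v ! j) (ts[i := replace (ts ! i) q (subst \<sigma> r)] ! j)"
  proof (intro allI impI)
    fix j assume j: "j < length (ts[i := replace (ts ! i) q (subst \<sigma> r)])"
    then have j': "j < length (succ G v)" using F by simp
    show "rep G' (succ G' v ! j) (ts[i := replace (ts ! i) q (subst \<sigma> r)] ! j)"
    proof (cases "j = i")
      case True
      then show ?thesis using IHi O j' F by simp
    next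
      case False
      have nw: "\<forall>q'. walk G (succ G v ! j) q' \<noteq> Some w" using other[OF j' False] .
      then have "succ G v ! j \<noteq> w" by (metis walk.simps(1))
      then have "rd (succ G v ! j) = succ G v ! j" by (rule rd_old)
      moreover have "rep G' (succ G v ! j) (ts ! j)" using NA F j' civ[OF j'] nw by auto
      ultimately show ?thesis using False O j' by simp
    qed
  qed
  have "rep G' v (Fun f (ts[i := replace (ts ! i) q (subst \<sigma> r)]))"
    using ch O F by (intro rep.rep_fun) auto
  then show ?case using rdv s by simp
qed

lemma fire_main:
  assumes p: "walk G (root G) p = Some w"
  shows "valid_pos t p \<and> subt t p = subst \<sigma> l \<and> rep G' (root G') (replace t p (subst \<sigma> r))"
proof -
  have rt: "rep G (root G) t" and rv: "root G \<in> verts G" using good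
    by (auto simp: good_def reach_def)
  have "valid_pos t p" "rep G w (subt t p)" using good_rep_walk[OF good p] by blast+
  moreover have "subt t p = subst \<sigma> l" using calculation(2) w_props(2) rep_functional by blast
  moreover have "rep G' (root G') (replace t p (subst \<sigma> r))" using ANC[OF rt rv p] G'_root by simp
  ultimately show ?thesis by blast
qed

lemma s'_cases: "(\<exists>x. x \<in> vars l \<and> s' = a x) \<or> (s' = \<iota> (True, []) \<and> (True, []) \<in> rset l r)"
proof (cases r)
  case (Var x)
  have "[] \<in> poss r" by (simp add: poss_def)
  moreover have "subt r [] = Var x" using Var by simp
  ultimately have x: "x \<in> vars l" and e: "\<psi> (rnode l r []) = a x" using psi_var[of "[]" x] by auto
  have e2: "s' = a x" using e by (simp add: s'_def rg_roots)
  then show ?thesis using x by blast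
next
  case (Fun g ts)
  then have sr: "subt r [] = Fun g ts" by simp
  then have "(True, []) \<in> rset l r" by (auto simp: rset_def poss_def)
  moreover have "s' = \<iota> (True, [])" using psi_fun[OF sr] by (simp add: s'_def rg_roots)
  ultimately show ?thesis by blast
qed

lemma s'_in: "s' \<in> verts G \<union> \<iota> ` rset l r"
  using s'_cases a_props by (metis UnI1 UnI2 imageI)

lemma rd_in: "v \<in> verts G \<Longrightarrow> rd v \<in> verts G \<union> \<iota> ` rset l r"
  using s'_in by (simp add: rd_def)

lemma rset_Fun: "(True, q) \<in> rset l r \<Longrightarrow> \<exists>g ts. subt r q = Fun g ts \<and> q \<in> poss r"
  by (auto simp: rset_def)

lemma E_new: "(True, q0) \<in> rset l r \<Longrightarrow> i < length (succ G' (\<iota> (True, q0))) \<Longrightarrow>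
   (\<exists>x. x \<in> vars l \<and> succ G' (\<iota> (True, q0)) ! i = a x) \<or>
   (succ G' (\<iota> (True, q0)) ! i = \<iota> (True, q0 @ [i]) \<and> (True, q0 @ [i]) \<in> rset l r)"
proof -
  assume q0: "(True, q0) \<in> rset l r" and i: "i < length (succ G' (\<iota> (True, q0)))"
  obtain g ts where gt: "subt r q0 = Fun g ts" "q0 \<in> poss r" using rset_Fun[OF q0] by blast
  note N = G'_new[OF q0 gt(1)]
  have il: "i < length ts" using i N by simp
  have e: "succ G' (\<iota> (True, q0)) ! i = rd (\<psi> (rnode l r (q0 @ [i])))" using N il by simp
  have qi: "q0 @ [i] \<in> poss r" using gt il by (simp add: valid_pos_append poss_def)
  have si: "subt r (q0 @ [i]) = ts ! i" using gt il by (simp add: subt_append poss_def)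
  show ?thesis
  proof (cases "ts ! i")
    case (Var x)
    then have "x \<in> vars l" "\<psi> (rnode l r (q0 @ [i])) = a x" using psi_var[OF qi] si by auto
    then show ?thesis using e rd_a by auto
  next
    case (Fun g' ts')
    then have 1: "\<psi> (rnode l r (q0 @ [i])) = \<iota> (True, q0 @ [i])" using psi_fun si by simp
    have 2: "(True, q0 @ [i]) \<in> rset l r" using qi si Fun by (auto simp: rset_def)
    show ?thesis using e 1 2 rd_iota[OF 2] by simp
  qed
qed

lemma finite_rset: "finite (rset l r)"
proof -
  have "rset l r \<subseteq> (\<lambda>q. (True, q)) ` poss r" by (auto simp: rset_def)
  then show ?thesis using finite_poss finite_subset by blast
qed

lemma G'_verts_sub: "verts G' \<subseteq> verts G \<union> \<iota> ` rset l r"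
proof
  fix u assume "u \<in> verts G'"
  then have "(root G', u) \<in> (edges (succ G'))\<^sup>*" using G'_verts by (simp add: reach_def)
  then show "u \<in> verts G \<union> \<iota> ` rset l r"
  proof (induction rule: rtrancl_induct)
    case base
    have "root G \<in> verts G" using good by (auto simp: good_def reach_def)
    then show ?case using rd_in G'_root by simp
  next
    case (step b c)
    then have c: "c \<in> set (succ G' b)" by (simp add: edges_def)
    then obtain i where i: "i < length (succ G' b)" "c = succ G' b ! i" by (auto simp: in_set_conv_nth)
    from step(3) show ?case
    proof
      assume b: "b \<in> verts G"
      then have "c \<in> rd ` set (succ G b)" using c G'_old by auto
      moreover have "set (succ G b) \<subseteq> verts G" using verts_closed b by blast
      ultimately show ?thesis using rd_in by blast
    next
      assume "b \<in> \<iota> ` rset l r"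
      then obtain y where y: "y \<in> rset l r" "b = \<iota> y" by blast
      then obtain q0 where q0: "y = (True, q0)" by (auto simp: rset_def)
      have "(\<exists>x. x \<in> vars l \<and> c = a x) \<or> (c = \<iota> (True, q0 @ [i]) \<and> (True, q0 @ [i]) \<in> rset l r)"
        using E_new[of q0 i] y q0 i by auto
      then show ?thesis using a_props by blast
    qed
  qed
qed

lemma G'_finite: "finite (verts G')"
proof -
  have "finite (verts G)" using good unfolding good_def by blast
  then show ?thesis using G'_verts_sub finite_rset finite_subset by (metis finite_Un finite_imageI)
qed

lemma root_in: "root G \<in> verts G"
  using good unfolding good_def reach_def by blast

lemma E_old: "v \<in> verts G \<Longrightarrow> i < length (succ G' v) \<Longrightarrow> succ G' v ! i = u \<Longrightarrow>
   i < length (succ G v) \<and> ((succ G v ! i = u \<and> u \<noteq> w) \<or> (succ G v ! i = w \<and> u = s'))"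
  using G'_old[of v] by (auto simp: rd_def split: if_splits)

lemma inedge_src: "(v, i) \<in> inedges G' u \<Longrightarrow>
   v \<in> verts G \<or> (\<exists>q0. (True, q0) \<in> rset l r \<and> v = \<iota> (True, q0))"
  using G'_verts_sub by (auto simp: inedges_def rset_def)

lemma old_nonvalue_ne: "u \<in> verts G \<Longrightarrow> rep G u s0 \<Longrightarrow> \<not> constr_term con s0 \<Longrightarrow>
   u \<noteq> s' \<and> (\<forall>x\<in>vars l. u \<noteq> a x)"
proof -
  assume u: "u \<in> verts G" and r0: "rep G u s0" and nc: "\<not> constr_term con s0"
  have na: "\<forall>x\<in>vars l. u \<noteq> a x"
  proof (intro ballI notI)
    fix x assume x: "x \<in> vars l" and "u = a x"
    then have "s0 = \<sigma> x" using r0 sigma_rep rep_functional by blast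
    then show False using nc sigma_rep[OF x] by simp
  qed
  moreover have "u \<noteq> s'" using s'_cases na u fresh_notin by metis
  ultimately show ?thesis by blast
qed

lemma inj_iota: "(True, q) \<in> rset l r \<Longrightarrow> (True, q') \<in> rset l r \<Longrightarrow> \<iota> (True, q) = \<iota> (True, q') \<Longrightarrow> q = q'"
  using fresh_inj by (auto dest: inj_onD)

lemma uniq_G': "uniq con G'"
  unfolding uniq_def
proof (intro allI impI)
  fix u s v i
  assume uv: "u \<in> verts G'" and rs: "rep G' u s" and nc: "\<not> constr_term con s"
    and e: "(v, i) \<in> inedges G' u"
  have uG: "uniq con G" using good unfolding good_def by blast
  from uv G'_verts_sub have "u \<in> verts G \<or> u \<in> \<iota> ` rset l r" by blast
  then show "u \<noteq> root G' \<and> (\<forall>v' i'. (v', i') \<in> inedges G' u \<longrightarrow> v' = v \<and> i' = i)"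
  proof
    assume u: "u \<in> verts G"
    obtain s0 where r0: "rep G u s0" using good_rep[OF good u] by blast
    have nc0: "\<not> constr_term con s0"
    proof (cases "\<exists>q. walk G u q = Some w")
      case True
      then obtain q where "walk G u q = Some w" by blast
      then have "valid_pos s0 q" "rep G w (subt s0 q)" using rep_walk[OF r0] by blast+
      then have "subt s0 q = subst \<sigma> l" using w_props(2) rep_functional by blast
      then show ?thesis using w_props(3) constr_subt \<open>valid_pos s0 q\<close> by metis
    next
      case False
      then have "rep G' u s0" using NA r0 u by blast
      then have "s = s0" using rs rep_functional by blast
      then show ?thesis using nc by simp
    qed
    note ne = old_nonvalue_ne[OF u r0 nc0]
    have sub: "\<And>v' i'. (v', i') \<in> inedges G' u \<Longrightarrow> (v', i') \<in> inedges G u"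
    proof -
      fix v' i' assume e': "(v', i') \<in> inedges G' u"
      then have i': "i' < length (succ G' v')" "succ G' v' ! i' = u" by (auto simp: inedges_def)
      from inedge_src[OF e'] show "(v', i') \<in> inedges G u"
      proof
        assume v': "v' \<in> verts G"
        then show ?thesis using E_old[OF v' i'] ne by (auto simp: inedges_def)
      next
        assume "\<exists>q0. (True, q0) \<in> rset l r \<and> v' = \<iota> (True, q0)"
        then obtain q0 where q0: "(True, q0) \<in> rset l r" "v' = \<iota> (True, q0)" by blast
        then have "(\<exists>x. x \<in> vars l \<and> u = a x) \<or> (u = \<iota> (True, q0 @ [i']) \<and> (True, q0 @ [i']) \<in> rset l r)"
          using E_new[of q0 i'] i' by auto
        then show ?thesis using ne u fresh_notin by blast
      qed
    qed
    have "(v, i) \<in> inedges G u" using sub e .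
    then have U: "u \<noteq> root G \<and> (\<forall>v' i'. (v', i') \<in> inedges G u \<longrightarrow> v' = v \<and> i' = i)"
      using uG u r0 nc0 unfolding uniq_def by blast
    have "u \<noteq> root G'"
    proof (cases "root G = w")
      case True
      then have "root G' = s'" using G'_root by (simp add: rd_def)
      then show ?thesis using ne by simp
    next
      case False
      then have "root G' = root G" using G'_root rd_old by simp
      then show ?thesis using U by simp
    qed
    then show ?thesis using U sub by blast
  next
    assume "u \<in> \<iota> ` rset l r"
    then obtain q where q: "(True, q) \<in> rset l r" "u = \<iota> (True, q)" by (auto simp: rset_def)
    have unv: "u \<notin> verts G" using q fresh_notin by simp
    have cl: "\<And>v' i'. (v', i') \<in> inedges G' u \<Longrightarrow> (q = [] \<and> (v', i') \<in> inedges G w) \<or>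
         (\<exists>q0. q = q0 @ [i'] \<and> v' = \<iota> (True, q0) \<and> (True, q0) \<in> rset l r)"
    proof -
      fix v' i' assume e': "(v', i') \<in> inedges G' u"
      then have i': "i' < length (succ G' v')" "succ G' v' ! i' = u" by (auto simp: inedges_def)
      from inedge_src[OF e'] show "?thesis v' i'"
      proof
        assume v': "v' \<in> verts G"
        note E = E_old[OF v' i']
        have "succ G v' ! i' \<in> verts G" using E verts_closed v' by (meson nth_mem subsetD)
        then have "succ G v' ! i' = w \<and> u = s'" using E unv by auto
        moreover have "q = []"
        proof -
          have "s' = \<iota> (True, [])" "(True, []) \<in> rset l r"
            using s'_cases calculation unv a_props by auto
          then show ?thesis using calculation q inj_iota by metis
        qed
        ultimately show ?thesis using v' E by (auto simp: inedges_def)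
      next
        assume "\<exists>q0. (True, q0) \<in> rset l r \<and> v' = \<iota> (True, q0)"
        then obtain q0 where q0: "(True, q0) \<in> rset l r" "v' = \<iota> (True, q0)" by blast
        then have "(\<exists>x. x \<in> vars l \<and> u = a x) \<or> (u = \<iota> (True, q0 @ [i']) \<and> (True, q0 @ [i']) \<in> rset l r)"
          using E_new[of q0 i'] i' by auto
        then have "u = \<iota> (True, q0 @ [i'])" "(True, q0 @ [i']) \<in> rset l r" using unv a_props by auto
        then have "q = q0 @ [i']" using q inj_iota by metis
        then show ?thesis using q0 by blast
      qed
    qed
    show ?thesis
    proof (cases "q = []")
      case True
      then have ew: "(v, i) \<in> inedges G w" using cl[OF e] by auto
      have U: "w \<noteq> root G \<and> (\<forall>v' i'. (v', i') \<in> inedges G w \<longrightarrow> v' = v \<and> i' = i)"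
        using uG w_props ew unfolding uniq_def by blast
      then have "root G' = root G" using G'_root rd_old by simp
      then have "u \<noteq> root G'" using unv root_in by auto
      moreover have "\<forall>v' i'. (v', i') \<in> inedges G' u \<longrightarrow> v' = v \<and> i' = i"
        using cl U True by blast
      ultimately show ?thesis by blast
    next
      case False
      obtain q0 where q0: "q = q0 @ [i]" "v = \<iota> (True, q0)" using cl[OF e] False by blast
      have "\<forall>v' i'. (v', i') \<in> inedges G' u \<longrightarrow> v' = v \<and> i' = i"
      proof (intro allI impI)
        fix v' i' assume "(v', i') \<in> inedges G' u"
        then obtain q0' where "q = q0' @ [i']" "v' = \<iota> (True, q0')" using cl False by blast
        then show "v' = v \<and> i' = i" using q0 by auto
      qed
      moreover have "u \<noteq> root G'"
      proof (cases "root G = w")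
        case True
        then have rt: "root G' = s'" using G'_root by (simp add: rd_def)
        show ?thesis
        proof
          assume "u = root G'"
          then have "u = s'" using rt by simp
          then have "s' = \<iota> (True, [])" "(True, []) \<in> rset l r"
            using s'_cases unv a_props by auto
          then have "q = []" using q inj_iota \<open>u = s'\<close> by metis
          then show False using False by simp
        qed
      next
        case False
        then have "root G' = root G" using G'_root rd_old by simp
        then show ?thesis using unv root_in by auto
      qed
      ultimately show ?thesis by blast
    qed
  qed
qed

lemma good_G': "good con G' (replace t p (subst \<sigma> r))" if "walk G (root G) p = Some w"
  using fire_main[OF that] G'_finite G'_verts uniq_G' by (simp add: good_def)

end




section \<open>The initial graph\<close>

lemma go_verts: "verts (graph_of t) = to_nat ` poss t"
  by (simp add: graph_of_def)

lemma go_root: "root (graph_of t) = to_nat ([] :: nat list)"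
  by (simp add: graph_of_def)

lemma go_succ: "q \<in> poss t \<Longrightarrow> succ (graph_of t) (to_nat q) =
   (case subt t q of Fun f ts \<Rightarrow> map (\<lambda>i. to_nat (q @ [i])) [0..<length ts] | Var x \<Rightarrow> [])"
  by (simp add: graph_of_def split: trm.splits)

lemma go_lab: "q \<in> poss t \<Longrightarrow> lab (graph_of t) (to_nat q) = (case subt t q of Fun f ts \<Rightarrow> Some f | Var x \<Rightarrow> None)"
  by (simp add: graph_of_def split: trm.splits)

lemma go_varof: "q \<in> poss t \<Longrightarrow> varof (graph_of t) (to_nat q) = (case subt t q of Fun f ts \<Rightarrow> None | Var x \<Rightarrow> Some x)"
  by (simp add: graph_of_def split: trm.splits)

lemma go_rep_aux: "\<forall>q. q \<in> poss t \<longrightarrow> subt t q = s \<longrightarrow> rep (graph_of t) (to_nat q) s"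
proof (induction s)
  case (Var x)
  then show ?case by (auto intro!: rep.rep_var simp: go_succ go_lab go_varof)
next
  case (Fun f ts)
  show ?case
  proof (intro allI impI)
    fix q assume q: "q \<in> poss t" "subt t q = Fun f ts"
    have "\<forall>i<length ts. rep (graph_of t) (to_nat (q @ [i])) (ts ! i)"
    proof (intro allI impI)
      fix i assume i: "i < length ts"
      have "q @ [i] \<in> poss t" using q i by (simp add: valid_pos_append poss_def)
      moreover have "subt t (q @ [i]) = ts ! i" using q i by (simp add: subt_append poss_def)
      ultimately show "rep (graph_of t) (to_nat (q @ [i])) (ts ! i)" using Fun.IH[of "ts ! i"] i
        by (simp add: nth_mem)
    qed
    then show "rep (graph_of t) (to_nat q) (Fun f ts)"
      using q by (auto intro!: rep.rep_fun simp: go_succ go_lab)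
  qed
qed

lemma go_walk: "q0 @ q \<in> poss t \<Longrightarrow> walk (graph_of t) (to_nat q0) q = Some (to_nat (q0 @ q))"
proof (induction q arbitrary: q0)
  case Nil
  then show ?case by simp
next
  case (Cons i q)
  have "valid_pos t ((q0 @ [i]) @ q)" using Cons.prems by (simp add: poss_def)
  then have vi: "valid_pos t (q0 @ [i])" using valid_pos_append by blast
  then obtain g ts where gt: "subt t q0 = Fun g ts" "i < length ts" using subt_snoc by blast
  have q0: "q0 \<in> poss t" using vi valid_pos_append by (auto simp: poss_def)
  have "walk (graph_of t) (to_nat (q0 @ [i])) q = Some (to_nat ((q0 @ [i]) @ q))"
    using Cons.IH[of "q0 @ [i]"] Cons.prems by simp
  then show ?case using go_succ[OF q0] gt by simp
qed

lemma go_inedge: "(v, i) \<in> inedges (graph_of t) u \<Longrightarrow>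
    \<exists>q0. v = to_nat q0 \<and> q0 \<in> poss t \<and> u = to_nat (q0 @ [i])"
proof -
  assume "(v, i) \<in> inedges (graph_of t) u"
  then obtain q0 where q0: "q0 \<in> poss t" "v = to_nat q0" and i: "i < length (succ (graph_of t) v)"
    and u: "succ (graph_of t) v ! i = u" by (auto simp: inedges_def go_verts)
  show ?thesis
  proof (cases "subt t q0")
    case (Var x)
    then show ?thesis using i q0 go_succ[OF q0(1)] by simp
  next
    case (Fun g ts)
    then show ?thesis using i u q0 go_succ[OF q0(1)] by auto
  qed
qed

lemma good_graph_of: "good con (graph_of t) t"
  unfolding good_def
proof (intro conjI)
  show "finite (verts (graph_of t))" unfolding go_verts by (rule finite_imageI[OF finite_poss])
  show "verts (graph_of t) = reach (succ (graph_of t)) (root (graph_of t))"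
  proof
    show "verts (graph_of t) \<subseteq> reach (succ (graph_of t)) (root (graph_of t))"
    proof
      fix u assume "u \<in> verts (graph_of t)"
      then obtain q where "q \<in> poss t" "u = to_nat q" by (auto simp: go_verts)
      then have "walk (graph_of t) (to_nat ([] :: nat list)) q = Some u" using go_walk[of "[]" q t] by simp
      then show "u \<in> reach (succ (graph_of t)) (root (graph_of t))" unfolding reach_walk go_root by blast
    qed
    show "reach (succ (graph_of t)) (root (graph_of t)) \<subseteq> verts (graph_of t)"
    proof
      fix u assume "u \<in> reach (succ (graph_of t)) (root (graph_of t))"
      then have "(root (graph_of t), u) \<in> (edges (succ (graph_of t)))\<^sup>*" by (simp add: reach_def)
      then show "u \<in> verts (graph_of t)"
      proof (induction rule: rtrancl_induct)
        case base
        then show ?case by (auto simp: go_verts go_root poss_def)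
      next
        case (step b c)
        then have c: "c \<in> set (succ (graph_of t) b)" by (simp add: edges_def)
        then obtain i where i: "i < length (succ (graph_of t) b)" "succ (graph_of t) b ! i = c"
          by (auto simp: in_set_conv_nth)
        then have "(b, i) \<in> inedges (graph_of t) c" using step(3) by (auto simp: inedges_def)
        then obtain q0 where "q0 \<in> poss t" "b = to_nat q0" "c = to_nat (q0 @ [i])" using go_inedge by blast
        then have "q0 @ [i] \<in> poss t" using i go_succ[of q0 t]
          by (cases "subt t q0") (auto simp: poss_def valid_pos_append)
        then show ?case using \<open>c = to_nat (q0 @ [i])\<close> by (simp add: go_verts)
      qed
    qed
  qed
  show "rep (graph_of t) (root (graph_of t)) t"
    using go_rep_aux[of t] by (auto simp: go_root poss_def)
  show "uniq con (graph_of t)"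
    unfolding uniq_def
  proof (intro allI impI)
    fix u s v i assume "u \<in> verts (graph_of t)" "rep (graph_of t) u s" "\<not> constr_term con s"
      and e: "(v, i) \<in> inedges (graph_of t) u"
    then obtain q0 where q0: "v = to_nat q0" "u = to_nat (q0 @ [i])" using go_inedge by blast
    have "u \<noteq> root (graph_of t)" using q0 by (simp add: go_root)
    moreover have "\<forall>v' i'. (v', i') \<in> inedges (graph_of t) u \<longrightarrow> v' = v \<and> i' = i"
    proof (intro allI impI)
      fix v' i' assume "(v', i') \<in> inedges (graph_of t) u"
      then obtain q0' where "v' = to_nat q0'" "u = to_nat (q0' @ [i'])" using go_inedge by blast
      then show "v' = v \<and> i' = i" using q0 by simp
    qed
    ultimately show "u \<noteq> root (graph_of t) \<and> (\<forall>v' i'. (v', i') \<in> inedges (graph_of t) u \<longrightarrow> v' = v \<and> i' = i)"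
      by blast
  qed
qed




lemma trs_rule: "constructor_trs con ar R \<Longrightarrow> (l, r) \<in> R \<Longrightarrow>
   (\<exists>f ps. l = Fun f ps \<and> \<not> con f) \<and> linear_trm l \<and> vars r \<subseteq> vars l"
  unfolding constructor_trs_def by fastforce

lemma subst_cong: "(\<forall>x\<in>vars t. \<sigma>1 x = \<sigma>2 x) \<Longrightarrow> subst \<sigma>1 t = subst \<sigma>2 t"
  by (induction t) auto

lemma fresh_exists: "finite (verts G) \<Longrightarrow> \<exists>\<iota>. fresh_for (rule_graph l r) \<iota> G"
proof -
  assume fin: "finite (verts G)"
  define \<iota> where "\<iota> = (\<lambda>y :: bool \<times> nat list. Suc (Max (verts G)) + to_nat y)"
  have "inj \<iota>" unfolding \<iota>_def by (auto intro!: injI)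
  moreover have "\<iota> y \<notin> verts G" for y
  proof
    assume "\<iota> y \<in> verts G"
    then have "\<iota> y \<le> Max (verts G)" using fin by simp
    then show False unfolding \<iota>_def by simp
  qed
  ultimately have "fresh_for (rule_graph l r) \<iota> G"
    unfolding fresh_for_def by (auto intro: inj_on_subset)
  then show ?thesis by blast
qed

lemma stepA:
  assumes g: "good con G t" and trs: "constructor_trs con ar R" and lr: "(l, r) \<in> R"
    and rx: "is_redex con (rule_graph l r) \<phi> G" and fr: "fresh_for (rule_graph l r) \<iota> G"
  shows "\<exists>t'. cbv_step con R t t' \<and> good con (fire (rule_graph l r) \<phi> \<iota> G) t'"
proof -
  interpret F: fire_setting con G t l r \<phi> \<iota>
    using g trs_rule[OF trs lr] rx fr by unfold_locales auto
  obtain p where p: "walk G (root G) p = Some F.w" using good_verts_walk[OF g F.w_props(1)] by blast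
  note M = F.fire_main[OF p]
  have "cbv_step con R t (replace t p (subst F.\<sigma> r))"
    unfolding cbv_step_def
    by (intro exI[of _ l] exI[of _ r] exI[of _ p] exI[of _ F.\<sigma>]) (use lr M F.sigma_rep in \<open>auto simp: poss_def\<close>)
  moreover have "good con (fire (rule_graph l r) \<phi> \<iota> G) (replace t p (subst F.\<sigma> r))"
    using F.good_G'[OF p] by (simp add: F.G'_def)
  ultimately show ?thesis by blast
qed

lemma stepB:
  assumes g: "good con G t" and trs: "constructor_trs con ar R" and st: "cbv_step con R t t'"
  shows "\<exists>G'. gstep con R G G' \<and> good con G' t'"
proof -
  obtain l r p \<sigma> where lr: "(l, r) \<in> R" and p: "p \<in> poss t"
    and cs: "\<forall>x\<in>vars l. constr_term con (\<sigma> x)" and sp: "subt t p = subst \<sigma> l"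
    and t': "t' = replace t p (subst \<sigma> r)"
    using st unfolding cbv_step_def by blast
  note TR = trs_rule[OF trs lr]
  have rt: "rep G (root G) t" using g by (simp add: good_def)
  obtain w where pw: "walk G (root G) p = Some w" using rep_walk_ex[OF rt] p by (auto simp: poss_def)
  have rw: "rep G w (subst \<sigma> l)" using good_rep_walk[OF g pw] sp by simp
  have wv: "w \<in> verts G" using good_walk_verts[OF g pw] .
  define \<phi> where "\<phi> = (\<lambda>y :: bool \<times> nat list. the (walk G w (snd y)))"
  have key: "\<And>q. q \<in> poss l \<Longrightarrow> walk G w q = Some (\<phi> (False, q)) \<and> \<phi> (False, q) \<in> verts G \<and>
      rep G (\<phi> (False, q)) (subst \<sigma> (subt l q))"
  proof -
    fix q assume q: "q \<in> poss l"
    then have "valid_pos (subst \<sigma> l) q" "subt (subst \<sigma> l) q = subst \<sigma> (subt l q)"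
      using subt_subst by (auto simp: poss_def)
    moreover obtain u where u: "walk G w q = Some u" using rep_walk_ex[OF rw] calculation(1) by blast
    ultimately show "walk G w q = Some (\<phi> (False, q)) \<and> \<phi> (False, q) \<in> verts G \<and>
      rep G (\<phi> (False, q)) (subst \<sigma> (subt l q))"
      using rep_walk[OF rw u] good_walk_closed[OF g wv u] by (simp add: \<phi>_def)
  qed
  have RL: "reach (gsucc (rule_graph l r)) (lroot (rule_graph l r)) = {(False, q) | q. q \<in> poss l}"
    using reach_lroot by (simp add: rg_roots)
  let ?S = "{(False, q) | q. q \<in> poss l}"
  have A1: "\<forall>v\<in>?S. \<phi> v \<in> verts G" using key by auto
  have A2: "\<forall>v\<in>?S. \<forall>f. glab (rule_graph l r) v = Some f \<longrightarrow>
      lab G (\<phi> v) = Some f \<and> succ G (\<phi> v) = map \<phi> (gsucc (rule_graph l r) v)"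
  proof (intro ballI allI impI)
    fix v f assume "v \<in> ?S" and gl: "glab (rule_graph l r) v = Some f"
    then obtain q where v: "v = (False, q)" and q: "q \<in> poss l" by blast
    note K = key[OF q]
    obtain ts where s: "subt l q = Fun f ts" using v gl
      by (cases "subt l q") (auto simp: rg_glab_False)
    have R: "rep G (\<phi> v) (Fun f (map (subst \<sigma>) ts))" using K v s by simp
    note D = rep_Fun_D[OF R]
    have "succ G (\<phi> v) = map \<phi> (gsucc (rule_graph l r) v)"
    proof (rule nth_equalityI)
      show "length (succ G (\<phi> v)) = length (map \<phi> (gsucc (rule_graph l r) v))"
        using D v s by (simp add: rg_gsucc_False)
    next
      fix i assume "i < length (succ G (\<phi> v))"
      then have i: "i < length ts" and i': "i < length (succ G (\<phi> v))" using D by simp_all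
      have "walk G w (q @ [i]) = walk G (\<phi> v) [i]" using K v walk_append_Some[of G w q "\<phi> v" "[i]"] by simp
      also have "\<dots> = Some (succ G (\<phi> v) ! i)" using i' by simp
      finally have wi: "walk G w (q @ [i]) = Some (succ G (\<phi> v) ! i)" .
      have "q @ [i] \<in> poss l" using q s i by (simp add: valid_pos_append poss_def)
      then have "walk G w (q @ [i]) = Some (\<phi> (False, q @ [i]))" using key by blast
      then have "\<phi> (False, q @ [i]) = succ G (\<phi> v) ! i" using wi by simp
      then show "succ G (\<phi> v) ! i = map \<phi> (gsucc (rule_graph l r) v) ! i"
        using v s i by (simp add: rg_gsucc_False)
    qed
    then show "lab G (\<phi> v) = Some f \<and> succ G (\<phi> v) = map \<phi> (gsucc (rule_graph l r) v)"
      using D by simp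
  qed
  have A3: "\<forall>v\<in>?S. glab (rule_graph l r) v = None \<longrightarrow>
      (\<forall>vs. is_path G vs \<and> hd vs = \<phi> v \<longrightarrow> constructor_path con G vs)"
  proof (intro ballI impI)
    fix v assume "v \<in> ?S" and gl: "glab (rule_graph l r) v = None"
    then obtain q where v: "v = (False, q)" and q: "q \<in> poss l" by blast
    note K = key[OF q]
    obtain x where s: "subt l q = Var x" using v gl
      by (cases "subt l q") (auto simp: rg_glab_False)
    then have x: "x \<in> vars l" using pos_vars q by (auto simp: poss_def)
    have R: "rep G (\<phi> v) (\<sigma> x)" using K v s by simp
    show "\<forall>vs. is_path G vs \<and> hd vs = \<phi> v \<longrightarrow> constructor_path con G vs"
      using path_constr[OF R] cs x by blast
  qed
  have rx: "is_redex con (rule_graph l r) \<phi> G"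
    unfolding is_redex_def RL using A1 A2 A3 by blast
  have fin: "finite (verts G)" using g unfolding good_def by blast
  obtain \<iota> where fr: "fresh_for (rule_graph l r) \<iota> G" using fresh_exists[OF fin] by blast
  interpret F: fire_setting con G t l r \<phi> \<iota>
    using g TR rx fr by unfold_locales auto
  have "\<phi> (False, []) = w" using key[of "[]"] by (simp add: poss_def)
  then have Fw: "F.w = w" by (simp add: F.w_def)
  have G'g: "good con F.G' (replace t p (subst F.\<sigma> r))" using F.good_G' pw Fw by simp
  have "subst F.\<sigma> r = subst \<sigma> r"
  proof (rule subst_cong, rule ballI)
    fix x assume "x \<in> vars r"
    then have x: "x \<in> vars l" using TR by blast
    have vp: "varpos l x \<in> poss l" "subt l (varpos l x) = Var x" using varpos[OF x] by auto
    have "rep G (F.a x) (\<sigma> x)" using key[OF vp(1)] vp(2) by (simp add: F.a_def)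
    then show "F.\<sigma> x = \<sigma> x" using F.sigma_rep[OF x] rep_functional by blast
  qed
  then have "good con F.G' t'" using G'g t' by simp
  moreover have "gstep con R G F.G'" unfolding gstep_def F.G'_def using lr rx fr by blast
  ultimately show ?thesis by blast
qed

lemma NF_equiv:
  assumes g: "good con G t" and trs: "constructor_trs con ar R"
  shows "graph_NF con R G \<longleftrightarrow> term_NF con R t"
proof
  assume gn: "graph_NF con R G"
  show "term_NF con R t"
    unfolding term_NF_def
  proof
    assume "\<exists>u'. cbv_step con R t u'"
    then obtain u' where "cbv_step con R t u'" by blast
    then obtain G' where "gstep con R G G'" using stepB[OF g trs] by blast
    then show False using gn unfolding gstep_def graph_NF_def by blast
  qed
next
  assume tn: "term_NF con R t"
  show "graph_NF con R G"
    unfolding graph_NF_def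
  proof
    assume "\<exists>l r \<phi>. (l, r) \<in> R \<and> is_redex con (rule_graph l r) \<phi> G"
    then obtain l r \<phi> where lr: "(l, r) \<in> R" and rx: "is_redex con (rule_graph l r) \<phi> G" by blast
    have fin: "finite (verts G)" using g unfolding good_def by blast
    obtain \<iota> where fr: "fresh_for (rule_graph l r) \<iota> G" using fresh_exists[OF fin] by blast
    obtain t' where "cbv_step con R t t'" using stepA[OF g trs lr rx fr] by blast
    then show False using tn unfolding term_NF_def by blast
  qed
qed

lemma main_equiv:
  assumes trs: "constructor_trs con ar R"
  shows "good con G t \<Longrightarrow> ((cbv_step con R ^^ n) t u \<and> term_NF con R u) \<longleftrightarrow>
         (\<exists>G'. (gstep con R ^^ n) G G' \<and> graph_NF con R G' \<and> term_of G' = u)"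
proof (induction n arbitrary: G t)
  case 0
  then show ?case using NF_equiv[OF 0 trs] good_term_of[OF 0] by auto
next
  case (Suc n)
  show ?case
  proof
    assume A: "(cbv_step con R ^^ Suc n) t u \<and> term_NF con R u"
    then have nf: "term_NF con R u" by blast
    from A have "(cbv_step con R ^^ Suc n) t u" by blast
    then obtain t1 where s1: "cbv_step con R t t1" and sn: "(cbv_step con R ^^ n) t1 u"
      using relpowp_Suc_D2 by metis
    obtain G1 where G1: "gstep con R G G1" "good con G1 t1" using stepB[OF Suc.prems trs s1] by blast
    then obtain G' where G': "(gstep con R ^^ n) G1 G'" "graph_NF con R G'" "term_of G' = u"
      using Suc.IH[OF G1(2)] sn nf by blast
    have "(gstep con R ^^ Suc n) G G'" by (rule relpowp_Suc_I2[where P="gstep con R", OF G1(1) G'(1)])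
    then show "\<exists>G'. (gstep con R ^^ Suc n) G G' \<and> graph_NF con R G' \<and> term_of G' = u"
      using G' by blast
  next
    assume "\<exists>G'. (gstep con R ^^ Suc n) G G' \<and> graph_NF con R G' \<and> term_of G' = u"
    then obtain G' where A: "(gstep con R ^^ Suc n) G G'" and nf: "graph_NF con R G'" and tu: "term_of G' = u"
      by blast
    then obtain G1 where s1: "gstep con R G G1" and sn: "(gstep con R ^^ n) G1 G'"
      using relpowp_Suc_D2 by metis
    from s1 obtain l r \<phi> \<iota> where lr: "(l, r) \<in> R" and rx: "is_redex con (rule_graph l r) \<phi> G"
      and fr: "fresh_for (rule_graph l r) \<iota> G" and G1: "G1 = fire (rule_graph l r) \<phi> \<iota> G"
      unfolding gstep_def by blast
    obtain t1 where t1: "cbv_step con R t t1" "good con G1 t1"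
      using stepA[OF Suc.prems trs lr rx fr] G1 by blast
    then have A: "(cbv_step con R ^^ n) t1 u \<and> term_NF con R u"
      using Suc.IH[OF t1(2)] sn nf tu by blast
    then have "(cbv_step con R ^^ Suc n) t u" using relpowp_Suc_I2[where P="cbv_step con R", OF t1(1)] by blast
    then show "(cbv_step con R ^^ Suc n) t u \<and> term_NF con R u"
      using A by blast
  qed
qed

theorem theorem3:
  fixes con :: "'f \<Rightarrow> bool" and ar :: "'f \<Rightarrow> nat"
    and R :: "(('f, 'x) trm \<times> ('f, 'x) trm) set"
    and t u :: "('f, 'x) trm" and n :: nat
  assumes "constructor_trs con ar R"
    and "wf_trm ar t"
  shows "((cbv_step con R ^^ n) t u \<and> term_NF con R u) \<longleftrightarrow>
         (\<exists>G. (gstep con R ^^ n) (graph_of t) G \<and> graph_NF con R G \<and> term_of G = u)"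
  using main_equiv[OF assms(1) good_graph_of] .


end
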